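(* (1) Every $a\in\mathbb{S}_1\setminus F$, viewed as a linear operator on $K[x]$, has finite-dimensional kernel and cokernel, and $\mathrm{ind}(a)=-\deg_x(\bar a)$, where $\bar a$ is the image of $a$ in $\mathbb{S}_1/F\simeq K[x,x^{-1}]$. (2) $\mathrm{ind}(\sigma(a))=\mathrm{ind}(a)$ for all $\sigma\in\mathrm{Aut}_{K\text{-alg}}(\mathbb{S}_1)$ and all $a\in\mathbb{S}_1\setminus F$.
   Context: $K$ is a field of characteristic zero. $\mathbb{S}_1=K\langle x,y\mid yx=1\rangle$ acts faithfully on $P_1=K[x]$ by $x*x^i=x^{i+1}$, $y*x^i=x^{i-1}$ ($i\ge1$), $y*1=0$; we regard $\mathbb{S}_1\subset\mathrm{End}_K(K[x])$. $E_{ij}:=x^iy^j-x^{i+1}y^{j+1}$ and $F=\bigoplus_{i,j\in\mathbb{N}}KE_{ij}$ is an ideal with $\mathbb{S}_1/F\simeq K[x,x^{-1}]$ via $x\mapsto x$, $y\mapsto x^{-1}$. For a nonzero Laurent polynomial $u=\sum_{i=s}^d\lambda_ix^i$ with $\lambda_d\ne0$, $\deg_x(u):=d$. For a linear map $\varphi$ with finite-dimensional kernel and cokernel, $\mathrm{ind}(\varphi):=\dim\ker\varphi-\dim\mathrm{coker}\,\varphi$. *)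

theory Defs
  imports "HOL-Computational_Algebra.Polynomial" "HOL-Computational_Algebra.Formal_Laurent_Series"
begin

definition opX :: "'k::field_char_0 poly \<Rightarrow> 'k poly" where
  "opX p = pCons 0 p"

definition opY :: "'k::field_char_0 poly \<Rightarrow> 'k poly" where
  "opY p = poly_shift 1 p"

text \<open>The Jacobson algebra S_1, viewed inside End_K(K[x]): the K-subalgebra generated by x and y.\<close>

inductive_set S1 :: "('k::field_char_0 poly \<Rightarrow> 'k poly) set" where
  S1_X: "opX \<in> S1"
| S1_Y: "opY \<in> S1"
| S1_one: "id \<in> S1"
| S1_add: "a \<in> S1 \<Longrightarrow> b \<in> S1 \<Longrightarrow> (\<lambda>p. a p + b p) \<in> S1"
| S1_smult: "a \<in> S1 \<Longrightarrow> (\<lambda>p. smult c (a p)) \<in> S1"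
| S1_mult: "a \<in> S1 \<Longrightarrow> b \<in> S1 \<Longrightarrow> a \<circ> b \<in> S1"

definition xy :: "nat \<Rightarrow> nat \<Rightarrow> 'k::field_char_0 poly \<Rightarrow> 'k poly" where
  "xy i j = (opX ^^ i) \<circ> (opY ^^ j)"

definition E :: "nat \<Rightarrow> nat \<Rightarrow> 'k::field_char_0 poly \<Rightarrow> 'k poly" where
  "E i j = (\<lambda>p. xy i j p - xy (Suc i) (Suc j) p)"

definition supp2 :: "(nat \<Rightarrow> nat \<Rightarrow> 'k::zero) \<Rightarrow> (nat \<times> nat) set" where
  "supp2 c = {(i, j). c i j \<noteq> 0}"

definition F :: "('k::field_char_0 poly \<Rightarrow> 'k poly) set" where
  "F = {a. \<exists>c. finite (supp2 c) \<and>
          a = (\<lambda>p. \<Sum>(i, j)\<in>supp2 c. smult (c i j) (E i j p))}"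

definition xy_comb :: "(nat \<Rightarrow> nat \<Rightarrow> 'k::field_char_0) \<Rightarrow> 'k poly \<Rightarrow> 'k poly" where
  "xy_comb c = (\<lambda>p. \<Sum>(i, j)\<in>supp2 c. smult (c i j) (xy i j p))"

definition laurent_comb :: "(nat \<Rightarrow> nat \<Rightarrow> 'k::field_char_0) \<Rightarrow> 'k fls" where
  "laurent_comb c = (\<Sum>(i, j)\<in>supp2 c. fls_const (c i j) * fls_X_intpow (int i - int j))"

definition bar :: "('k::field_char_0 poly \<Rightarrow> 'k poly) \<Rightarrow> 'k fls" where
  "bar a = (THE u. \<exists>c. finite (supp2 c) \<and> a = xy_comb c \<and> u = laurent_comb c)"

definition laurent_deg :: "'k::zero fls \<Rightarrow> int" where
  "laurent_deg u = Max {n. fls_nth u n \<noteq> 0}"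

definition ker :: "('k::field poly \<Rightarrow> 'k poly) \<Rightarrow> 'k poly set" where
  "ker a = {p. a p = 0}"

definition fin_dim_ker :: "('k::field poly \<Rightarrow> 'k poly) \<Rightarrow> bool" where
  "fin_dim_ker a \<longleftrightarrow> (\<exists>B. finite B \<and> ker a \<subseteq> module.span smult B)"

text \<open>Cokernel K[x]/im(a) is finite-dimensional iff finitely many vectors together with im(a)
  span K[x]; its dimension is the least number of such vectors.\<close>

definition fin_dim_coker :: "('k::field poly \<Rightarrow> 'k poly) \<Rightarrow> bool" where
  "fin_dim_coker a \<longleftrightarrow> (\<exists>B. finite B \<and> module.span smult (range a \<union> B) = UNIV)"

definition dim_coker :: "('k::field poly \<Rightarrow> 'k poly) \<Rightarrow> nat" where
  "dim_coker a = (LEAST n. \<exists>B. finite B \<and> card B = n \<and> module.span smult (range a \<union> B) = UNIV)"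

definition ind :: "('k::field poly \<Rightarrow> 'k poly) \<Rightarrow> int" where
  "ind a = int (vector_space.dim smult (ker a)) - int (dim_coker a)"

definition is_S1_aut :: "(('k::field_char_0 poly \<Rightarrow> 'k poly) \<Rightarrow> ('k poly \<Rightarrow> 'k poly)) \<Rightarrow> bool" where
  "is_S1_aut \<sigma> \<longleftrightarrow> bij_betw \<sigma> S1 S1
     \<and> (\<forall>a\<in>S1. \<forall>b\<in>S1. \<sigma> (\<lambda>p. a p + b p) = (\<lambda>p. \<sigma> a p + \<sigma> b p))
     \<and> (\<forall>a\<in>S1. \<forall>c. \<sigma> (\<lambda>p. smult c (a p)) = (\<lambda>p. smult c (\<sigma> a p)))
     \<and> (\<forall>a\<in>S1. \<forall>b\<in>S1. \<sigma> (a \<circ> b) = \<sigma> a \<circ> \<sigma> b)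
     \<and> \<sigma> id = id"

end

theory Submission
  imports Defs "HOL-Computational_Algebra.Polynomial_FPS"
begin

interpretation pvs: vector_space "smult :: 'k::field \<Rightarrow> 'k poly \<Rightarrow> 'k poly"
  by unfold_locales (auto simp: smult_add_right smult_add_left)

definition lin :: "('k::field poly \<Rightarrow> 'k poly) \<Rightarrow> bool" where
  "lin f \<longleftrightarrow> (\<forall>p q. f (p + q) = f p + f q) \<and> (\<forall>c p. f (smult c p) = smult c (f p))"

lemma lin_mh: "lin f \<Longrightarrow> module_hom smult smult f"
  unfolding lin_def module_hom_iff by (simp add: pvs.module_axioms)

lemma lin_add: "lin f \<Longrightarrow> f (p + q) = f p + f q" by (simp add: lin_def)
lemma lin_smult: "lin f \<Longrightarrow> f (smult c p) = smult c (f p)" by (simp add: lin_def)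
lemma lin_0: "lin f \<Longrightarrow> f 0 = 0" using module_hom.zero[OF lin_mh] by blast
lemma lin_diff: "lin f \<Longrightarrow> f (p - q) = f p - f q" using module_hom.diff[OF lin_mh] by blast
lemma lin_sum: "lin f \<Longrightarrow> f (sum g A) = (\<Sum>a\<in>A. f (g a))" using module_hom.sum[OF lin_mh] by blast

lemma lin_span_image: "lin f \<Longrightarrow> pvs.span (f ` S) = f ` pvs.span S"
  using module_hom.span_image[OF lin_mh] by blast

lemma lin_subspace_image: "lin f \<Longrightarrow> pvs.subspace S \<Longrightarrow> pvs.subspace (f ` S)"
  using module_hom.subspace_image[OF lin_mh] by blast

lemma dim_insert_sub:
  fixes S :: "'k::field poly set"
  assumes S: "pvs.subspace S" and B: "finite B" "S \<subseteq> pvs.span B" and w: "w \<notin> S"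
  shows "pvs.dim (pvs.span (insert w S)) = pvs.dim S + 1"
proof -
  obtain C where C: "C \<subseteq> S" "pvs.independent C" "S \<subseteq> pvs.span C" "card C = pvs.dim S"
    using pvs.basis_exists by blast
  have fC: "finite C" using pvs.independent_span_bound[OF B(1) C(2)] C(1) B(2) by blast
  have spC: "pvs.span C = S" using C S by (metis pvs.span_subspace)
  have wC: "w \<notin> C" using C(1) w by blast
  have ind: "pvs.independent (insert w C)"
    using pvs.independent_insertI[OF _ C(2)] w spC by simp
  have "card (insert w C) = pvs.dim (pvs.span (insert w S))"
  proof (rule pvs.basis_card_eq_dim)
    show "insert w C \<subseteq> pvs.span (insert w S)" using C(1) pvs.span_superset by blast
    have "insert w S \<subseteq> pvs.span (insert w C)"
      using spC pvs.span_mono[of C "insert w C"] pvs.span_superset[of "insert w C"] by blast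
    then show "pvs.span (insert w S) \<subseteq> pvs.span (insert w C)"
      using pvs.span_minimal pvs.subspace_span by blast
    show "pvs.independent (insert w C)" by (rule ind)
  qed
  then show ?thesis using fC wC C(4) by simp
qed

definition spans :: "'k::field poly set \<Rightarrow> 'k poly set \<Rightarrow> bool" where
  "spans R B \<longleftrightarrow> finite B \<and> pvs.span (R \<union> B) = UNIV"

definition cod :: "'k::field poly set \<Rightarrow> nat" where
  "cod R = (LEAST n. \<exists>B. finite B \<and> card B = n \<and> pvs.span (R \<union> B) = UNIV)"

lemma dim_coker_cod: "dim_coker a = cod (range a)"
  by (simp add: dim_coker_def cod_def)

lemma fin_dim_coker_spans: "fin_dim_coker a \<longleftrightarrow> (\<exists>B. spans (range a) B)"
  by (simp add: fin_dim_coker_def spans_def)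

lemma cod_le:
  assumes "spans R B" shows "cod R \<le> card B"
proof -
  have "\<exists>B'. finite B' \<and> card B' = card B \<and> pvs.span (R \<union> B') = UNIV"
    using assms unfolding spans_def by blast
  then show ?thesis unfolding cod_def by (rule Least_le)
qed

lemma cod_ex:
  assumes "spans R B" shows "\<exists>B'. spans R B' \<and> card B' = cod R"
proof -
  have "\<exists>n. \<exists>B'. finite B' \<and> card B' = n \<and> pvs.span (R \<union> B') = UNIV"
    using assms unfolding spans_def by blast
  from LeastI_ex[OF this] obtain B' where
    "finite B'" "card B' = cod R" "pvs.span (R \<union> B') = UNIV" unfolding cod_def by blast
  then show ?thesis unfolding spans_def by blast
qed

lemma exch:
  fixes S :: "'k::field poly set"
  assumes "finite B" "w \<in> pvs.span (S \<union> B)" "w \<notin> pvs.span S"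
  shows "\<exists>b\<in>B. b \<in> pvs.span (insert w (S \<union> (B - {b})))"
  using assms
proof (induction B rule: finite_induct)
  case empty then show ?case by simp
next
  case (insert b B)
  show ?case
  proof (cases "w \<in> pvs.span (S \<union> B)")
    case True
    then obtain b' where b': "b' \<in> B" "b' \<in> pvs.span (insert w (S \<union> (B - {b'})))"
      using insert by blast
    have "insert w (S \<union> (B - {b'})) \<subseteq> insert w (S \<union> (insert b B - {b'}))" by blast
    then show ?thesis using b' pvs.span_mono by blast
  next
    case False
    have "w \<in> pvs.span (insert b (S \<union> B))" using insert.prems(1) by simp
    then have "b \<in> pvs.span (insert w (S \<union> B))" using pvs.in_span_insert False by blast
    moreover have "insert b B - {b} = B" using insert.hyps(2) by blast
    ultimately have "b \<in> pvs.span (insert w (S \<union> (insert b B - {b})))" by simp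
    then show ?thesis by blast
  qed
qed

lemma cod_insert:
  fixes R :: "'k::field poly set"
  assumes R: "pvs.subspace R" and w: "w \<notin> R"
  shows "(\<exists>B. spans R B) \<longleftrightarrow> (\<exists>B. spans (pvs.span (insert w R)) B)"
    and "(\<exists>B. spans R B) \<Longrightarrow> cod R = cod (pvs.span (insert w R)) + 1"
proof -
  let ?R' = "pvs.span (insert w R)"
  have eq: "pvs.span (?R' \<union> B) = pvs.span (R \<union> insert w B)" for B
  proof -
    have "?R' \<union> B \<subseteq> pvs.span (insert w R \<union> B)"
      using pvs.span_mono[of "insert w R" "insert w R \<union> B"] pvs.span_superset[of "insert w R \<union> B"]
      by blast
    moreover have "insert w R \<union> B \<subseteq> pvs.span (?R' \<union> B)"
      using pvs.span_superset[of "?R' \<union> B"] pvs.span_superset[of "insert w R"] by blast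
    ultimately have "pvs.span (?R' \<union> B) = pvs.span (insert w R \<union> B)"
      using pvs.span_eq by blast
    moreover have "insert w R \<union> B = R \<union> insert w B" by blast
    ultimately show ?thesis by simp
  qed
  have A: "spans ?R' B \<Longrightarrow> spans R (insert w B)" for B
    using eq by (simp add: spans_def)
  have Bq: "spans R B \<Longrightarrow> \<exists>B'. spans ?R' B' \<and> card B' + 1 = card B" for B
  proof -
    assume sp: "spans R B"
    have "w \<in> pvs.span (R \<union> B)" using sp by (simp add: spans_def)
    moreover have "w \<notin> pvs.span R" using R w by (metis pvs.span_eq_iff)
    moreover have fB: "finite B" using sp by (simp add: spans_def)
    ultimately obtain b where b: "b \<in> B" "b \<in> pvs.span (insert w (R \<union> (B - {b})))"
      using exch[OF fB, of w R] by blast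
    have sub: "R \<union> insert w (B - {b}) \<subseteq> pvs.span (R \<union> insert w (B - {b}))"
      by (rule pvs.span_superset)
    have "insert w (R \<union> (B - {b})) = R \<union> insert w (B - {b})" by blast
    then have "b \<in> pvs.span (R \<union> insert w (B - {b}))" using b(2) by simp
    then have "R \<union> insert w B \<subseteq> pvs.span (R \<union> insert w (B - {b}))"
      using sub by blast
    then have "pvs.span (R \<union> insert w B) \<subseteq> pvs.span (R \<union> insert w (B - {b}))"
      using pvs.span_minimal pvs.subspace_span by blast
    moreover have "pvs.span (R \<union> B) \<subseteq> pvs.span (R \<union> insert w B)"
      by (rule pvs.span_mono) blast
    ultimately have "pvs.span (R \<union> insert w (B - {b})) = UNIV" using sp unfolding spans_def by blast
    then have "spans ?R' (B - {b})" using eq sp by (simp add: spans_def)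
    moreover have "card (B - {b}) + 1 = card B"
    proof -
      have fB: "finite B" using sp by (simp add: spans_def)
      then have "card B > 0" using b by (auto simp: card_gt_0_iff)
      moreover have "card (B - {b}) = card B - 1" using b by (simp add: card_Diff_singleton)
      ultimately show ?thesis by linarith
    qed
    ultimately show ?thesis by blast
  qed
  show "(\<exists>B. spans R B) \<longleftrightarrow> (\<exists>B. spans ?R' B)" using A Bq by blast
  assume ex: "\<exists>B. spans R B"
  then obtain B where B: "spans R B" "card B = cod R" using cod_ex by blast
  obtain B' where B': "spans ?R' B'" "card B' + 1 = card B" using Bq[OF B(1)] by blast
  obtain C where C: "spans ?R' C" "card C = cod ?R'" using cod_ex B'(1) by blast
  have "cod R \<le> card (insert w C)" using cod_le A[OF C(1)] by blast
  also have "\<dots> \<le> card C + 1" using C(1) by (simp add: spans_def card_insert_if)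
  finally have 1: "cod R \<le> cod ?R' + 1" using C by simp
  have "cod ?R' \<le> card B'" using cod_le B'(1) by blast
  then show "cod R = cod ?R' + 1" using 1 B B' by linarith
qed


lemma span_sub_eq: "pvs.subspace S \<Longrightarrow> pvs.span S = S"
  by (metis pvs.span_eq_iff)

lemma decomp_elem:
  fixes H :: "'k::field poly set"
  assumes H: "pvs.subspace H" and sp: "pvs.span (insert v H) = UNIV"
  obtains h k where "h \<in> H" "p = h + smult k v"
proof -
  have "p \<in> pvs.span (insert v H)" using sp by simp
  then obtain k where "p - smult k v \<in> pvs.span H" using pvs.span_breakdown_eq by blast
  then have "p - smult k v \<in> H" using span_sub_eq[OF H] by simp
  moreover have "p = (p - smult k v) + smult k v" by simp
  ultimately show ?thesis using that by blast
qed

lemma decomp: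
  fixes f :: "'k::field poly \<Rightarrow> 'k poly"
  assumes f: "lin f" and H: "pvs.subspace H" and v: "v \<notin> H"
    and sp: "pvs.span (insert v H) = UNIV"
  defines "kH \<equiv> {p\<in>H. f p = 0}"
  shows "fin_dim_ker f \<longleftrightarrow> (\<exists>B. finite B \<and> kH \<subseteq> pvs.span B)"
    and "fin_dim_coker f \<longleftrightarrow> (\<exists>B. spans (f ` H) B)"
    and "fin_dim_ker f \<Longrightarrow> fin_dim_coker f \<Longrightarrow>
           ind f = int (pvs.dim kH) - int (cod (f ` H)) + 1"
proof -
  have kHsub: "pvs.subspace kH"
  proof -
    have "kH = H \<inter> {p. f p = 0}" unfolding kH_def by blast
    moreover have "pvs.subspace {p. f p = 0}" using module_hom.subspace_kernel[OF lin_mh[OF f]] .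
    ultimately show ?thesis using pvs.subspace_inter[OF H] by simp
  qed
  have kHker: "kH \<subseteq> ker f" unfolding kH_def ker_def by blast
  have fHsub: "pvs.subspace (f ` H)" using lin_subspace_image[OF f H] .
  have rng: "range f = pvs.span (insert (f v) (f ` H))"
  proof -
    have "pvs.span (f ` insert v H) = f ` pvs.span (insert v H)" using lin_span_image[OF f] .
    then show ?thesis using sp by simp
  qed
  have fHr: "f ` H \<subseteq> range f" by blast
  show "fin_dim_ker f \<longleftrightarrow> (\<exists>B. finite B \<and> kH \<subseteq> pvs.span B)"
    and "fin_dim_coker f \<longleftrightarrow> (\<exists>B. spans (f ` H) B)"
    and "fin_dim_ker f \<Longrightarrow> fin_dim_coker f \<Longrightarrow>
           ind f = int (pvs.dim kH) - int (cod (f ` H)) + 1"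
  proof -
    have "(fin_dim_ker f \<longleftrightarrow> (\<exists>B. finite B \<and> kH \<subseteq> pvs.span B))
      \<and> (fin_dim_coker f \<longleftrightarrow> (\<exists>B. spans (f ` H) B))
      \<and> (fin_dim_ker f \<longrightarrow> fin_dim_coker f \<longrightarrow>
           ind f = int (pvs.dim kH) - int (cod (f ` H)) + 1)"
    proof (cases "f v \<in> f ` H")
      case False
      have kerA: "ker f = kH"
      proof
        show "kH \<subseteq> ker f" by (rule kHker)
        show "ker f \<subseteq> kH"
        proof
          fix p assume p: "p \<in> ker f"
          obtain h k where hk: "h \<in> H" "p = h + smult k v" using decomp_elem[OF H sp] by blast
          have "f h + smult k (f v) = 0" using p hk f by (simp add: ker_def lin_add lin_smult)
          have k0: "k = 0"
          proof (rule ccontr)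
            assume k: "k \<noteq> 0"
            have "f (smult (- inverse k) h) = smult (- inverse k) (f h)" by (rule lin_smult[OF f])
            also have "f h = - smult k (f v)" using \<open>f h + smult k (f v) = 0\<close>
              by (simp add: eq_neg_iff_add_eq_0)
            also have "smult (- inverse k) (- smult k (f v)) = f v" using k by simp
            finally have "f v = f (smult (- inverse k) h)" by simp
            moreover have "smult (- inverse k) h \<in> H" using H hk(1) by (rule pvs.subspace_scale)
            ultimately show False using False by blast
          qed
          then show "p \<in> kH" using hk p by (simp add: kH_def ker_def)
        qed
      qed
      have fvR: "f v \<notin> f ` H" using False .
      have codA: "(\<exists>B. spans (f ` H) B) \<longleftrightarrow> (\<exists>B. spans (range f) B)"
        using cod_insert(1)[OF fHsub fvR] rng by simp
      have codB: "(\<exists>B. spans (f ` H) B) \<Longrightarrow> cod (f ` H) = cod (range f) + 1"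
        using cod_insert(2)[OF fHsub fvR] rng by simp
      show ?thesis
        using kerA codA codB
        by (auto simp: fin_dim_ker_def fin_dim_coker_spans ind_def dim_coker_cod)
    next
      case True
      then obtain h0 where h0: "h0 \<in> H" "f v = f h0" by blast
      let ?w = "v - h0"
      have wkH: "?w \<notin> kH"
      proof
        assume "?w \<in> kH"
        then have "?w \<in> H" by (simp add: kH_def)
        then have "?w + h0 \<in> H" using pvs.subspace_add[OF H _ h0(1)] by blast
        then show False using v by simp
      qed
      have kerB: "ker f = pvs.span (insert ?w kH)"
      proof
        have "insert ?w kH \<subseteq> ker f" using kHker h0 f by (simp add: ker_def lin_diff)
        moreover have "pvs.subspace (ker f)"
          unfolding ker_def using module_hom.subspace_kernel[OF lin_mh[OF f]] .
        ultimately show "pvs.span (insert ?w kH) \<subseteq> ker f" using pvs.span_minimal by blast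
        show "ker f \<subseteq> pvs.span (insert ?w kH)"
        proof
          fix p assume p: "p \<in> ker f"
          obtain h k where hk: "h \<in> H" "p = h + smult k v" using decomp_elem[OF H sp] by blast
          have hH: "h + smult k h0 \<in> H" using H hk(1) h0(1)
            by (simp add: pvs.subspace_add pvs.subspace_scale)
          have "f (h + smult k h0) = f p" using hk h0 f by (simp add: lin_add lin_smult)
          then have "h + smult k h0 \<in> kH" using hH p by (simp add: kH_def ker_def)
          moreover have "p = (h + smult k h0) + smult k ?w" using hk by (simp add: smult_diff_right)
          ultimately show "p \<in> pvs.span (insert ?w kH)"
            by (metis pvs.span_add pvs.span_base pvs.span_scale insertI1 insertI2)
        qed
      qed
      have rngB: "range f = f ` H"
      proof
        show "f ` H \<subseteq> range f" by blast
        show "range f \<subseteq> f ` H"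
        proof
          fix y assume "y \<in> range f"
          then obtain p where y: "y = f p" by blast
          obtain h k where hk: "h \<in> H" "p = h + smult k v" using decomp_elem[OF H sp] by blast
          have hH: "h + smult k h0 \<in> H" using H hk(1) h0(1)
            by (simp add: pvs.subspace_add pvs.subspace_scale)
          have "f (h + smult k h0) = y" using hk h0 f y by (simp add: lin_add lin_smult)
          then show "y \<in> f ` H" using hH by blast
        qed
      qed
      have finK: "fin_dim_ker f \<longleftrightarrow> (\<exists>B. finite B \<and> kH \<subseteq> pvs.span B)"
      proof
        assume "fin_dim_ker f"
        then obtain B where "finite B" "ker f \<subseteq> pvs.span B" by (auto simp: fin_dim_ker_def)
        then show "\<exists>B. finite B \<and> kH \<subseteq> pvs.span B" using kHker by blast
      next
        assume "\<exists>B. finite B \<and> kH \<subseteq> pvs.span B"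
        then obtain B where B: "finite B" "kH \<subseteq> pvs.span B" by blast
        have "insert ?w kH \<subseteq> pvs.span (insert ?w B)"
          using B(2) pvs.span_mono[of B "insert ?w B"] pvs.span_base[of ?w "insert ?w B"] by blast
        then have "ker f \<subseteq> pvs.span (insert ?w B)"
          unfolding kerB using pvs.span_minimal pvs.subspace_span by blast
        then show "fin_dim_ker f" using B(1) by (auto simp: fin_dim_ker_def)
      qed
      have dimB: "fin_dim_ker f \<Longrightarrow> pvs.dim (ker f) = pvs.dim kH + 1"
      proof -
        assume "fin_dim_ker f"
        then obtain B where B: "finite B" "kH \<subseteq> pvs.span B" using finK by blast
        show ?thesis unfolding kerB using dim_insert_sub[OF kHsub B wkH] .
      qed
      show ?thesis using finK dimB rngB
        by (auto simp: fin_dim_coker_spans ind_def dim_coker_cod)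
    qed
    then show "fin_dim_ker f \<longleftrightarrow> (\<exists>B. finite B \<and> kH \<subseteq> pvs.span B)"
      and "fin_dim_coker f \<longleftrightarrow> (\<exists>B. spans (f ` H) B)"
      and "fin_dim_ker f \<Longrightarrow> fin_dim_coker f \<Longrightarrow>
           ind f = int (pvs.dim kH) - int (cod (f ` H)) + 1" by blast+
  qed
qed

lemma agree:
  fixes f g :: "'k::field poly \<Rightarrow> 'k poly"
  assumes f: "lin f" and g: "lin g" and H: "pvs.subspace H" and v: "v \<notin> H"
    and sp: "pvs.span (insert v H) = UNIV" and eq: "\<forall>p\<in>H. f p = g p"
  shows "fin_dim_ker f = fin_dim_ker g" and "fin_dim_coker f = fin_dim_coker g"
    and "fin_dim_ker f \<Longrightarrow> fin_dim_coker f \<Longrightarrow> ind f = ind g"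
proof -
  have k: "{p\<in>H. f p = 0} = {p\<in>H. g p = 0}" using eq by auto
  have i: "f ` H = g ` H" using eq by (auto simp: image_def)
  note F = decomp[OF f H v sp] and G = decomp[OF g H v sp]
  show "fin_dim_ker f = fin_dim_ker g" using F(1) G(1) k by simp
  show "fin_dim_coker f = fin_dim_coker g" using F(2) G(2) i by simp
  assume "fin_dim_ker f" "fin_dim_coker f"
  moreover have "fin_dim_ker g" "fin_dim_coker g" using calculation F(1,2) G(1,2) k i by simp_all
  ultimately show "ind f = ind g" using F(3) G(3) k i by simp
qed

definition Hk :: "nat \<Rightarrow> 'k::field poly set" where "Hk k = {p. coeff p k = 0}"
definition Pk :: "nat \<Rightarrow> 'k::field poly set" where "Pk k = {p. \<forall>i\<ge>k. coeff p i = 0}"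

lemma Hk_sub: "pvs.subspace (Hk k)"
  by (rule pvs.subspaceI) (auto simp: Hk_def)

lemma Hk_notin: "(monom 1 k :: 'k::field poly) \<notin> Hk k"
  by (simp add: Hk_def)

lemma Hk_span: "pvs.span (insert (monom 1 k) (Hk k :: 'k::field poly set)) = UNIV"
proof -
  have "p \<in> pvs.span (insert (monom 1 k) (Hk k))" for p :: "'k poly"
  proof -
    have "p - smult (coeff p k) (monom 1 k) \<in> Hk k" by (simp add: Hk_def)
    then have "p - smult (coeff p k) (monom 1 k) \<in> pvs.span (Hk k)" using pvs.span_base by blast
    then show ?thesis using pvs.span_breakdown_eq by blast
  qed
  then show ?thesis by blast
qed

lemma lin_cutoff: "lin (poly_cutoff k :: 'k::field poly \<Rightarrow> 'k poly)"
  unfolding lin_def by (auto simp: poly_eq_iff coeff_poly_cutoff)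

lemma lin_comp: "lin f \<Longrightarrow> lin g \<Longrightarrow> lin (\<lambda>p. f (g p))"
  unfolding lin_def by simp

lemma lin_plus: "lin f \<Longrightarrow> lin g \<Longrightarrow> lin (\<lambda>p. f p + g p)"
  unfolding lin_def by (simp add: smult_add_right)

lemma lin_minus_cut: "lin (\<lambda>p. p - poly_cutoff k p :: 'k::field poly)"
  unfolding lin_def by (auto simp: poly_eq_iff coeff_poly_cutoff algebra_simps)

lemma chain:
  fixes a b :: "'k::field poly \<Rightarrow> 'k poly"
  assumes a: "lin a" and b: "lin b"
    and eq: "\<And>p. (\<forall>i<N. coeff p i = 0) \<Longrightarrow> a p = b p"
    and fb: "fin_dim_ker b" "fin_dim_coker b"
  shows "fin_dim_ker a \<and> fin_dim_coker a \<and> ind a = ind b"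
proof -
  define g where "g k p = a (p - poly_cutoff k p) + b (poly_cutoff k p)" for k p
  have lg: "lin (g k)" for k
    unfolding g_def[abs_def]
    by (rule lin_plus[OF lin_comp[OF a lin_minus_cut] lin_comp[OF b lin_cutoff]])
  have g0: "g 0 = a"
  proof
    fix p :: "'k poly" have "poly_cutoff 0 p = 0" by (simp add: poly_eq_iff coeff_poly_cutoff)
    then show "g 0 p = a p" using lin_0[OF b] by (simp add: g_def)
  qed
  have gN: "g N = b"
  proof
    fix p :: "'k poly"
    have "\<forall>i<N. coeff (p - poly_cutoff N p) i = 0" by (simp add: coeff_poly_cutoff)
    then have "a (p - poly_cutoff N p) = b (p - poly_cutoff N p)" by (rule eq)
    then show "g N p = b p" by (simp add: g_def lin_diff[OF b])
  qed
  have step: "g k p = g (Suc k) p" if "p \<in> Hk k" for k p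
  proof -
    have "poly_cutoff (Suc k) p = poly_cutoff k p"
      using that by (auto simp: poly_eq_iff coeff_poly_cutoff Hk_def less_Suc_eq)
    then show ?thesis by (simp add: g_def)
  qed
  have main: "\<forall>k. k + m = N \<longrightarrow> fin_dim_ker (g k) \<and> fin_dim_coker (g k) \<and> ind (g k) = ind b" for m
  proof (induction m)
    case 0 then show ?case using gN fb by auto
  next
    case (Suc m)
    show ?case
    proof (intro allI impI)
      fix k assume k: "k + Suc m = N"
      then have IH: "fin_dim_ker (g (Suc k)) \<and> fin_dim_coker (g (Suc k)) \<and> ind (g (Suc k)) = ind b"
        using Suc.IH by simp
      have stepk: "\<forall>p\<in>Hk k. g k p = g (Suc k) p" using step by blast
      note A = agree[OF lg[of k] lg[of "Suc k"] Hk_sub[of k] Hk_notin[of k] Hk_span[of k] stepk]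
      have k1: "fin_dim_ker (g k)" using A(1) IH by simp
      have k2: "fin_dim_coker (g k)" using A(2) IH by simp
      have "ind (g k) = ind (g (Suc k))" by (rule A(3)[OF k1 k2])
      then show "fin_dim_ker (g k) \<and> fin_dim_coker (g k) \<and> ind (g k) = ind b"
        using k1 k2 IH by simp
    qed
  qed
  show ?thesis using main[of N] g0 by simp
qed

lemma Pk_sub: "pvs.subspace (Pk k)"
  by (rule pvs.subspaceI) (auto simp: Pk_def)

lemma Pk_0: "Pk 0 = {0}"
  by (auto simp: Pk_def poly_eq_iff)

lemma monom_notin_Pk: "(monom 1 k :: 'k::field poly) \<notin> Pk k"
  by (auto simp: Pk_def)

lemma Pk_mem_Suc: "(monom 1 k :: 'k::field poly) \<in> Pk (Suc k)"
  unfolding Pk_def by (simp add: coeff_monom)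

lemma Pk_mono: "Pk k \<subseteq> (Pk (Suc k) :: 'k::field poly set)"
  unfolding Pk_def by auto

lemma Pk_red: "p \<in> Pk (Suc k) \<Longrightarrow> p - smult (coeff p k) (monom 1 k) \<in> (Pk k :: 'k::field poly set)"
  unfolding Pk_def
proof (intro CollectI allI impI)
  fix i assume p: "p \<in> {p. \<forall>i\<ge>Suc k. coeff p i = 0}" and i: "k \<le> i"
  show "coeff (p - smult (coeff p k) (monom 1 k)) i = 0"
  proof (cases "i = k")
    case True then show ?thesis by (simp add: coeff_monom)
  next
    case False
    then have "Suc k \<le> i" using i by simp
    then have "coeff p i = 0" using p by simp
    then show ?thesis using False by (simp add: coeff_monom)
  qed
qed

lemma Pk_Suc: "pvs.span (insert (monom 1 k) (Pk k)) = (Pk (Suc k) :: 'k::field poly set)"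
proof
  have "insert (monom 1 k) (Pk k) \<subseteq> (Pk (Suc k) :: 'k poly set)"
    using Pk_mem_Suc Pk_mono by blast
  then show "pvs.span (insert (monom 1 k) (Pk k)) \<subseteq> (Pk (Suc k) :: 'k poly set)"
    by (rule pvs.span_minimal[OF _ Pk_sub])
  show "Pk (Suc k) \<subseteq> pvs.span (insert (monom 1 k) (Pk k :: 'k poly set))"
  proof
    fix p :: "'k poly" assume p: "p \<in> Pk (Suc k)"
    have "p - smult (coeff p k) (monom 1 k) \<in> Pk k" using Pk_red[OF p] .
    then have "p - smult (coeff p k) (monom 1 k) \<in> pvs.span (Pk k)" by (rule pvs.span_base)
    then show "p \<in> pvs.span (insert (monom 1 k) (Pk k))" using pvs.span_breakdown_eq by blast
  qed
qed

lemma dim_zero_space: "pvs.dim ({0} :: 'k::field poly set) = 0"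
proof -
  have "card ({} :: 'k poly set) = pvs.dim ({0} :: 'k poly set)"
    by (rule pvs.basis_card_eq_dim) (auto, metis pvs.independent_empty)
  then show ?thesis by simp
qed

lemma dim_Pk: "pvs.dim (Pk k :: 'k::field poly set) = k \<and> (\<exists>B. finite B \<and> (Pk k :: 'k poly set) \<subseteq> pvs.span B)"
proof (induction k)
  case 0
  have "(Pk 0 :: 'k poly set) \<subseteq> pvs.span {}" unfolding Pk_0 by simp
  then show ?case using dim_zero_space unfolding Pk_0 by (intro conjI exI[of _ "{}"]) auto
next
  case (Suc k)
  then obtain B where B: "finite B" "(Pk k :: 'k poly set) \<subseteq> pvs.span B" by blast
  have "pvs.dim (pvs.span (insert (monom 1 k) (Pk k :: 'k poly set))) = pvs.dim (Pk k :: 'k poly set) + 1"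
    by (rule dim_insert_sub[OF Pk_sub B monom_notin_Pk])
  then have "pvs.dim (Pk (Suc k) :: 'k poly set) = pvs.dim (Pk k :: 'k poly set) + 1"
    by (simp only: Pk_Suc)
  then have d: "pvs.dim (Pk (Suc k) :: 'k poly set) = Suc k" using Suc.IH by simp
  have "insert (monom 1 k) (Pk k) \<subseteq> pvs.span (insert (monom 1 k) B)"
    using B(2) pvs.span_mono[of B "insert (monom 1 k) B"] pvs.span_base[of "monom 1 k"] by blast
  then have "pvs.span (insert (monom 1 k) (Pk k)) \<subseteq> pvs.span (insert (monom 1 k) B)"
    by (rule pvs.span_minimal[OF _ pvs.subspace_span])
  then have "Pk (Suc k) \<subseteq> pvs.span (insert (monom 1 k) B)" by (simp only: Pk_Suc)
  then show ?case using B(1) d by (intro conjI exI[of _ "insert (monom 1 k) B"]) auto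
qed

definition Qk :: "'k::field poly \<Rightarrow> nat \<Rightarrow> 'k poly set" where
  "Qk q k = {q * r + s | r s. s \<in> Pk k}"

lemma Qk_sub: "pvs.subspace (Qk q k)"
proof (rule pvs.subspaceI)
  have "0 \<in> Pk k" by (simp add: Pk_def)
  then show "0 \<in> Qk q k" unfolding Qk_def by (intro CollectI exI[of _ 0] exI[of _ 0]) simp
  fix x y assume "x \<in> Qk q k" "y \<in> Qk q k"
  then obtain r s r' s' where "x = q * r + s" "s \<in> Pk k" "y = q * r' + s'" "s' \<in> Pk k"
    unfolding Qk_def by blast
  then show "x + y \<in> Qk q k" unfolding Qk_def
    by (intro CollectI exI[of _ "r + r'"] exI[of _ "s + s'"])
       (auto simp: algebra_simps pvs.subspace_add[OF Pk_sub])
next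
  fix c x assume "x \<in> Qk q k"
  then obtain r s where "x = q * r + s" "s \<in> Pk k" unfolding Qk_def by blast
  then show "smult c x \<in> Qk q k" unfolding Qk_def
    by (intro CollectI exI[of _ "smult c r"] exI[of _ "smult c s"])
       (auto simp: smult_add_right pvs.subspace_scale[OF Pk_sub])
qed

lemma Qk_Suc: "pvs.span (insert (monom 1 k) (Qk q k)) = Qk q (Suc k)"
proof
  have "Qk q k \<subseteq> Qk q (Suc k)"
  proof
    fix x assume "x \<in> Qk q k"
    then obtain r s where rs: "x = q * r + s" "s \<in> Pk k" unfolding Qk_def by blast
    then have "s \<in> Pk (Suc k)" using Pk_mono by blast
    then show "x \<in> Qk q (Suc k)" unfolding Qk_def using rs(1)
      by (intro CollectI exI[of _ r] exI[of _ s]) simp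
  qed
  moreover have "monom 1 k \<in> Qk q (Suc k)" unfolding Qk_def Pk_def
    by (intro CollectI exI[of _ 0] exI[of _ "monom 1 k"]) (auto simp: coeff_monom)
  ultimately have "insert (monom 1 k) (Qk q k) \<subseteq> Qk q (Suc k)" by simp
  then show "pvs.span (insert (monom 1 k) (Qk q k)) \<subseteq> Qk q (Suc k)"
    by (rule pvs.span_minimal[OF _ Qk_sub])
  show "Qk q (Suc k) \<subseteq> pvs.span (insert (monom 1 k) (Qk q k))"
  proof
    fix p assume "p \<in> Qk q (Suc k)"
    then obtain r s where rs: "p = q * r + s" "s \<in> Pk (Suc k)" unfolding Qk_def by blast
    have "s - smult (coeff s k) (monom 1 k) \<in> Pk k"
      using rs(2) by (auto simp: Pk_def coeff_monom le_Suc_eq)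
    then have "p - smult (coeff s k) (monom 1 k) \<in> Qk q k" unfolding Qk_def using rs(1)
      by (intro CollectI exI[of _ r] exI[of _ "s - smult (coeff s k) (monom 1 k)"]) auto
    then have "p - smult (coeff s k) (monom 1 k) \<in> pvs.span (Qk q k)" using pvs.span_base by blast
    then show "p \<in> pvs.span (insert (monom 1 k) (Qk q k))" using pvs.span_breakdown_eq by blast
  qed
qed

lemma monom_notin_Qk:
  assumes "k < degree q" shows "monom 1 k \<notin> Qk q k"
proof
  assume "monom 1 k \<in> Qk q k"
  then obtain r s where rs: "monom 1 k = q * r + s" "s \<in> Pk k" unfolding Qk_def by blast
  show False
  proof (cases "r = 0")
    case True
    then have "s = monom 1 k" using rs(1) by simp
    then have "coeff s k = 1" by simp
    then show False using rs(2) by (auto simp: Pk_def)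
  next
    case False
    have q0: "q \<noteq> 0" using assms by auto
    have "degree (q * r) \<ge> degree q" using False q0 by (simp add: degree_mult_eq)
    moreover have "q * r = monom 1 k - s" using rs(1) by simp
    moreover have "degree (monom 1 k - s) \<le> k"
      using rs(2) by (intro degree_le) (auto simp: Pk_def coeff_monom)
    ultimately have "degree (q * r) \<le> k" by simp
    then show False using \<open>degree (q * r) \<ge> degree q\<close> assms by linarith
  qed
qed

lemma Qk_top: "q \<noteq> 0 \<Longrightarrow> Qk q (degree q) = UNIV"
proof -
  assume q: "q \<noteq> 0"
  have "p \<in> Qk q (degree q)" for p
  proof -
    have "p mod q \<in> Pk (degree q)"
      using degree_mod_less[OF q, of p] by (auto simp: Pk_def intro: coeff_eq_0)
    moreover have "p = q * (p div q) + p mod q" by simp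
    ultimately show ?thesis unfolding Qk_def
      by (intro CollectI exI[of _ "p div q"] exI[of _ "p mod q"]) simp
  qed
  then show ?thesis by blast
qed

lemma cod_Qk:
  assumes q: "q \<noteq> 0"
  shows "\<forall>k. k + m = degree q \<longrightarrow> (\<exists>B. spans (Qk q k) B) \<and> cod (Qk q k) = m"
proof (induction m)
  case 0
  show ?case
  proof (intro allI impI)
    fix k assume "k + 0 = degree q"
    then have QU: "Qk q k = UNIV" using Qk_top[OF q] by simp
    have sp: "spans (Qk q k) {}" unfolding QU spans_def by simp
    then show "(\<exists>B. spans (Qk q k) B) \<and> cod (Qk q k) = 0" using cod_le[OF sp] by auto
  qed
next
  case (Suc m)
  show ?case
  proof (intro allI impI)
    fix k assume k: "k + Suc m = degree q"
    then have IH: "(\<exists>B. spans (Qk q (Suc k)) B) \<and> cod (Qk q (Suc k)) = m" using Suc.IH by simp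
    have nk: "monom 1 k \<notin> Qk q k" using k by (intro monom_notin_Qk) simp
    note C = cod_insert[OF Qk_sub nk, unfolded Qk_Suc]
    have e: "\<exists>B. spans (Qk q k) B" using C(1) IH by blast
    show "(\<exists>B. spans (Qk q k) B) \<and> cod (Qk q k) = Suc m" using C(2)[OF e] IH e by simp
  qed
qed

lemma base_op:
  fixes q :: "'k::field poly" and N :: nat
  assumes q: "q \<noteq> 0"
  defines "b \<equiv> (\<lambda>p. q * poly_shift N p)"
  shows "lin b" "fin_dim_ker b" "fin_dim_coker b" "ind b = int N - int (degree q)"
proof -
  have s1: "poly_shift N (p + p') = poly_shift N p + poly_shift N p'" for p p' :: "'k poly"
    by (simp add: poly_eq_iff coeff_poly_shift)
  have s2: "poly_shift N (smult c p) = smult c (poly_shift N p)" for c and p :: "'k poly"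
    by (simp add: poly_eq_iff coeff_poly_shift)
  show lb: "lin b" unfolding lin_def b_def
    by (simp add: s1 s2 distrib_left)
  have kerb: "ker b = Pk N"
  proof -
    have "b p = 0 \<longleftrightarrow> p \<in> Pk N" for p
    proof -
      have "b p = 0 \<longleftrightarrow> poly_shift N p = 0" using q by (simp add: b_def)
      also have "\<dots> \<longleftrightarrow> (\<forall>i. coeff p (i + N) = 0)" by (simp add: poly_eq_iff coeff_poly_shift)
      also have "\<dots> \<longleftrightarrow> p \<in> Pk N" unfolding Pk_def
      proof (intro iffI allI impI CollectI)
        fix i assume A: "\<forall>i. coeff p (i + N) = 0" and i: "N \<le> i"
        have "coeff p (i - N + N) = 0" using A by blast
        then show "coeff p i = 0" using i by simp
      next
        fix i assume "p \<in> {p. \<forall>i\<ge>N. coeff p i = 0}"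
        then show "coeff p (i + N) = 0" by simp
      qed
      finally show ?thesis .
    qed
    then show ?thesis by (auto simp: ker_def)
  qed
  have rngb: "range b = Qk q 0"
  proof
    show "range b \<subseteq> Qk q 0"
    proof
      fix x assume "x \<in> range b"
      then obtain p where "x = q * poly_shift N p" by (auto simp: b_def)
      then show "x \<in> Qk q 0" unfolding Qk_def Pk_0
        by (intro CollectI exI[of _ "poly_shift N p"] exI[of _ 0]) simp
    qed
    show "Qk q 0 \<subseteq> range b"
    proof
      fix x assume "x \<in> Qk q 0"
      then obtain r where x: "x = q * r" unfolding Qk_def Pk_0 by auto
      have "poly_shift N (monom 1 N * r) = r" by (simp add: poly_eq_iff coeff_poly_shift coeff_monom_mult)
      then have "b (monom 1 N * r) = x" using x by (simp add: b_def)
      then show "x \<in> range b" by (metis rangeI)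
    qed
  qed
  have D: "pvs.dim (Pk N :: 'k poly set) = N \<and> (\<exists>B. finite B \<and> (Pk N :: 'k poly set) \<subseteq> pvs.span B)" by (rule dim_Pk)
  show "fin_dim_ker b" using D kerb unfolding fin_dim_ker_def by metis
  have C: "(\<exists>B. spans (Qk q 0) B) \<and> cod (Qk q 0) = degree q" using cod_Qk[OF q, of "degree q"] by simp
  show "fin_dim_coker b" using C rngb by (simp add: fin_dim_coker_spans)
  have "ind b = int (pvs.dim (ker b)) - int (cod (range b))" by (simp add: ind_def dim_coker_cod)
  also have "\<dots> = int (pvs.dim (Pk N :: 'k poly set)) - int (cod (Qk q 0))" by (simp only: kerb rngb)
  also have "\<dots> = int N - int (degree q)" using conjunct2[OF C] conjunct1[OF D] by simp
  finally show "ind b = int N - int (degree q)" .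
qed

lemma op_index:
  fixes a :: "'k::field poly \<Rightarrow> 'k poly"
  assumes a: "lin a" and q: "q \<noteq> 0"
    and eq: "\<And>p. (\<forall>i<N. coeff p i = 0) \<Longrightarrow> a p = q * poly_shift N p"
  shows "fin_dim_ker a \<and> fin_dim_coker a \<and> ind a = int N - int (degree q)"
proof -
  note B = base_op[OF q, of N]
  have "fin_dim_ker a \<and> fin_dim_coker a \<and> ind a = ind (\<lambda>p. q * poly_shift N p)"
    by (rule chain[OF a B(1) _ B(2,3)]) (rule eq)
  then show ?thesis using B(4) by simp
qed

definition emb :: "'k::field poly \<Rightarrow> 'k fls" where "emb p = fps_to_fls (fps_of_poly p)"

lemma emb_nth: "fls_nth (emb p) n = (if n < 0 then 0 else coeff p (nat n))"
  by (simp add: emb_def)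

lemma emb_add: "emb (p + q) = emb p + emb q"
  by (simp add: emb_def fps_of_poly_add)

lemma emb_smult: "emb (smult c p) = fls_const c * emb p"
  by (rule fls_eqI) (simp add: emb_nth)

lemma emb_mult: "emb (p * q) = emb p * emb q"
  by (simp add: emb_def fps_of_poly_mult fls_times_fps_to_fls)

lemma emb_inj: "emb p = emb q \<longleftrightarrow> p = q"
  by (simp add: emb_def fps_of_poly_eq_iff)

lemma emb_0 [simp]: "emb 0 = 0"
  by (simp add: emb_def)

lemma emb_eq_0: "emb p = 0 \<longleftrightarrow> p = 0"
  using emb_inj[of p 0] by simp

lemma emb_sum: "emb (\<Sum>x\<in>A. f x) = (\<Sum>x\<in>A. emb (f x))"
  by (induction A rule: infinite_finite_induct) (auto simp: emb_add)

definition low :: "nat \<Rightarrow> 'k::field poly \<Rightarrow> bool" where "low N p \<longleftrightarrow> (\<forall>i<N. coeff p i = 0)"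

lemma low_mono: "low N p \<Longrightarrow> M \<le> N \<Longrightarrow> low M p"
  by (auto simp: low_def)

lemma emb_shift: "low j p \<Longrightarrow> emb (poly_shift j p) = fls_shift (int j) (emb p)"
proof (rule fls_eqI)
  fix n assume l: "low j p"
  show "fls_nth (emb (poly_shift j p)) n = fls_nth (fls_shift (int j) (emb p)) n"
  proof (cases "n < 0")
    case True
    show ?thesis
    proof (cases "n + int j < 0")
      case False
      then have "nat (n + int j) < j" using True by linarith
      then have "coeff p (nat (n + int j)) = 0" using l by (simp add: low_def)
      then show ?thesis using True False by (simp add: emb_nth)
    qed (use True in \<open>simp add: emb_nth\<close>)
  next
    case False
    then have "nat (n + int j) = nat n + j" by linarith
    then show ?thesis using False by (simp add: emb_nth coeff_poly_shift)
  qed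
qed

lemma emb_monom_mult: "emb (monom 1 i * p) = fls_shift (- int i) (emb p)"
proof (rule fls_eqI)
  fix n
  show "fls_nth (emb (monom 1 i * p)) n = fls_nth (fls_shift (- int i) (emb p)) n"
  proof (cases "n < 0")
    case True then show ?thesis by (simp add: emb_nth)
  next
    case False
    show ?thesis
    proof (cases "nat n < i")
      case True then show ?thesis using False by (simp add: emb_nth coeff_monom_mult)
    next
      case F2: False
      then have "nat (n - int i) = nat n - i" by linarith
      then show ?thesis using False F2 by (simp add: emb_nth coeff_monom_mult)
    qed
  qed
qed

lemma opX_pow: "(opX ^^ i) p = monom 1 i * p"
proof (induction i arbitrary: p)
  case 0 then show ?case by simp
next
  case (Suc i)
  have "(opX ^^ Suc i) p = pCons 0 (monom 1 i * p)" by (simp add: Suc opX_def)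
  also have "\<dots> = monom 1 (Suc i) * p"
    by (simp add: poly_eq_iff coeff_monom_mult coeff_pCons split: nat.split)
  finally show ?case .
qed

lemma opY_pow: "(opY ^^ j) p = poly_shift j p"
proof (induction j arbitrary: p)
  case 0 then show ?case by simp
next
  case (Suc j)
  have "(opY ^^ Suc j) p = poly_shift 1 (poly_shift j p)" by (simp add: Suc opY_def)
  also have "\<dots> = poly_shift (Suc j) p" by (simp add: poly_eq_iff coeff_poly_shift)
  finally show ?case .
qed

lemma xy_eq: "xy i j p = monom 1 i * poly_shift j p"
  by (simp add: xy_def opX_pow opY_pow)

definition LP :: "('k::field_char_0 poly \<Rightarrow> 'k poly) \<Rightarrow> 'k fls \<Rightarrow> nat \<Rightarrow> bool" where
  "LP a u N \<longleftrightarrow> (\<forall>p. low N p \<longrightarrow> emb (a p) = u * emb p)"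

lemma LP_mono: "LP a u N \<Longrightarrow> N \<le> M \<Longrightarrow> LP a u M"
  unfolding LP_def using low_mono by blast

lemma emb_xy: "low j p \<Longrightarrow> emb (xy i j p) = fls_X_intpow (int i - int j) * emb p"
  using fls_X_intpow_times_conv_shift(1)[of "int i - int j" "emb p"]
  by (simp add: xy_eq emb_monom_mult emb_shift)

lemma xy_comb_superset:
  assumes "finite S" "supp2 c \<subseteq> S"
  shows "xy_comb c p = (\<Sum>(i, j)\<in>S. smult (c i j) (xy i j p))"
  unfolding xy_comb_def
  by (rule sum.mono_neutral_left[OF assms(1,2)]) (auto simp: supp2_def)

lemma laurent_comb_superset:
  assumes "finite S" "supp2 c \<subseteq> S"
  shows "laurent_comb c = (\<Sum>(i, j)\<in>S. fls_const (c i j) * fls_X_intpow (int i - int j))"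
  unfolding laurent_comb_def
  by (rule sum.mono_neutral_left[OF assms(1,2)]) (auto simp: supp2_def)

definition Nb :: "(nat \<Rightarrow> nat \<Rightarrow> 'k::zero) \<Rightarrow> nat" where
  "Nb c = (\<Sum>x\<in>supp2 c. snd x)"

lemma Nb_ge: "finite (supp2 c) \<Longrightarrow> (i, j) \<in> supp2 c \<Longrightarrow> j \<le> Nb c"
  unfolding Nb_def using member_le_sum[of "(i,j)" "supp2 c" snd] by simp

lemma LP_xy_comb:
  assumes fin: "finite (supp2 c)"
  shows "LP (xy_comb c) (laurent_comb c) (Nb c)"
  unfolding LP_def
proof (intro allI impI)
  fix p :: "'a poly" assume l: "low (Nb c) p"
  have "emb (xy_comb c p) = (\<Sum>x\<in>supp2 c. emb (smult (c (fst x) (snd x)) (xy (fst x) (snd x) p)))"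
    unfolding xy_comb_def by (simp add: emb_sum case_prod_beta)
  also have "\<dots> = (\<Sum>x\<in>supp2 c. fls_const (c (fst x) (snd x)) * fls_X_intpow (int (fst x) - int (snd x)) * emb p)"
  proof (rule sum.cong)
    fix x assume x: "x \<in> supp2 c"
    have "low (snd x) p" using l Nb_ge[OF fin, of "fst x" "snd x"] x low_mono by simp
    then show "emb (smult (c (fst x) (snd x)) (xy (fst x) (snd x) p)) =
      fls_const (c (fst x) (snd x)) * fls_X_intpow (int (fst x) - int (snd x)) * emb p"
      by (simp add: emb_smult emb_xy mult.assoc)
  qed simp
  also have "\<dots> = laurent_comb c * emb p"
    unfolding laurent_comb_def by (simp add: sum_distrib_right case_prod_beta)
  finally show "emb (xy_comb c p) = laurent_comb c * emb p" .
qed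

definition NF :: "('k::field_char_0 poly \<Rightarrow> 'k poly) \<Rightarrow> bool" where
  "NF a \<longleftrightarrow> (\<exists>c. finite (supp2 c) \<and> a = xy_comb c)"

lemma NF_zero: "NF (\<lambda>p. 0)"
proof -
  have "supp2 (\<lambda>i j. 0 :: 'a) = {}" by (simp add: supp2_def)
  then show ?thesis unfolding NF_def xy_comb_def by (intro exI[of _ "\<lambda>i j. 0"]) simp
qed

lemma NF_add:
  assumes "NF a" "NF b" shows "NF (\<lambda>p. a p + b p)"
proof -
  obtain c where c: "finite (supp2 c)" "a = xy_comb c" using assms(1) NF_def by blast
  obtain d where d: "finite (supp2 d)" "b = xy_comb d" using assms(2) NF_def by blast
  define e where "e i j = c i j + d i j" for i j
  define S where "S = supp2 c \<union> supp2 d"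
  have fS: "finite S" using c d by (simp add: S_def)
  have eS: "supp2 e \<subseteq> S" by (auto simp: supp2_def S_def e_def)
  have "(\<lambda>p. a p + b p) = xy_comb e"
  proof
    fix p
    have "a p = (\<Sum>(i, j)\<in>S. smult (c i j) (xy i j p))"
      using c by (simp add: xy_comb_superset[OF fS] S_def)
    moreover have "b p = (\<Sum>(i, j)\<in>S. smult (d i j) (xy i j p))"
      using d by (simp add: xy_comb_superset[OF fS] S_def)
    moreover have "xy_comb e p = (\<Sum>(i, j)\<in>S. smult (e i j) (xy i j p))"
      by (rule xy_comb_superset[OF fS eS])
    ultimately show "a p + b p = xy_comb e p"
      by (simp add: e_def smult_add_left sum.distrib case_prod_beta)
  qed
  moreover have "finite (supp2 e)" using fS eS finite_subset by blast
  ultimately show ?thesis unfolding NF_def by blast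
qed

lemma NF_smult:
  assumes "NF a" shows "NF (\<lambda>p. smult k (a p))"
proof -
  obtain c where c: "finite (supp2 c)" "a = xy_comb c" using assms(1) NF_def by blast
  define e where "e i j = k * c i j" for i j
  have eS: "supp2 e \<subseteq> supp2 c" by (auto simp: supp2_def e_def)
  have "(\<lambda>p. smult k (a p)) = xy_comb e"
  proof
    fix p
    have "xy_comb e p = (\<Sum>(i, j)\<in>supp2 c. smult (e i j) (xy i j p))"
      by (rule xy_comb_superset[OF c(1) eS])
    then show "smult k (a p) = xy_comb e p"
      using c by (simp add: e_def xy_comb_def pvs.scale_sum_right case_prod_beta)
  qed
  moreover have "finite (supp2 e)" using c eS finite_subset by blast
  ultimately show ?thesis unfolding NF_def by blast
qed

lemma NF_sum:
  assumes "finite A" "\<forall>s\<in>A. NF (f s)" shows "NF (\<lambda>p. \<Sum>s\<in>A. f s p)"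
  using assms
proof (induction A rule: finite_induct)
  case empty then show ?case using NF_zero by simp
next
  case (insert x A)
  have "NF (\<lambda>p. f x p + (\<Sum>s\<in>A. f s p))"
    using insert by (intro NF_add) auto
  then show ?case using insert by simp
qed

lemma NF_xy: "NF (\<lambda>p. smult k (xy i j p))"
proof -
  define c where "c a b = (if a = i \<and> b = j then (1::'a) else 0)" for a b
  have s: "supp2 c = {(i, j)}" by (auto simp: supp2_def c_def)
  have "NF (xy_comb c)" unfolding NF_def using s by (intro exI[of _ c]) simp
  moreover have "xy_comb c = xy i j" unfolding xy_comb_def s by (simp add: c_def)
  ultimately show ?thesis using NF_smult by simp
qed

lemma lin_opX: "lin opX"
  unfolding lin_def opX_def by simp

lemma lin_opY: "lin opY"
  unfolding lin_def opY_def by (simp add: poly_eq_iff coeff_poly_shift)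

lemma opX_xy: "opX (xy i j p) = xy (Suc i) j p"
  by (simp add: xy_def)

lemma opY_xy: "opY (xy i j p) = xy (if i = 0 then 0 else i - 1) (if i = 0 then Suc j else j) p"
  by (auto simp: xy_eq opY_def poly_eq_iff coeff_poly_shift coeff_monom_mult)

lemma xy_comb_alt: "xy_comb c p = (\<Sum>s\<in>supp2 c. smult (c (fst s) (snd s)) (xy (fst s) (snd s) p))"
  unfolding xy_comb_def by (simp add: case_prod_beta)

lemma NF_left:
  assumes l: "lin h" and NFb: "NF b"
    and h: "\<And>i j. NF (\<lambda>p. h (xy i j p))"
  shows "NF (h \<circ> b)"
proof -
  obtain c where c: "finite (supp2 c)" "b = xy_comb c" using NFb NF_def by blast
  have "(h \<circ> b) = (\<lambda>p. \<Sum>s\<in>supp2 c. smult (c (fst s) (snd s)) (h (xy (fst s) (snd s) p)))"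
    using c(2) by (simp add: fun_eq_iff xy_comb_alt lin_sum[OF l] lin_smult[OF l])
  moreover have "NF (\<lambda>p. \<Sum>s\<in>supp2 c. smult (c (fst s) (snd s)) (h (xy (fst s) (snd s) p)))"
    using c(1) h by (intro NF_sum NF_smult ballI) auto
  ultimately show ?thesis by simp
qed

lemma NF_comp: "a \<in> S1 \<Longrightarrow> NF b \<Longrightarrow> NF (a \<circ> b)"
proof (induction a arbitrary: b rule: S1.induct)
  case S1_X
  show ?case by (rule NF_left[OF lin_opX S1_X.prems]) (simp add: opX_xy NF_xy[of 1, simplified])
next
  case S1_Y
  show ?case by (rule NF_left[OF lin_opY S1_Y.prems]) (simp add: opY_xy NF_xy[of 1, simplified])
next
  case S1_one then show ?case by simp
next
  case (S1_add a1 a2)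
  have "(\<lambda>p. a1 p + a2 p) \<circ> b = (\<lambda>p. (a1 \<circ> b) p + (a2 \<circ> b) p)" by auto
  then show ?case using S1_add NF_add by metis
next
  case (S1_smult a k)
  have "(\<lambda>p. smult k (a p)) \<circ> b = (\<lambda>p. smult k ((a \<circ> b) p))" by auto
  then show ?case using S1_smult NF_smult by metis
next
  case (S1_mult a1 a2)
  then show ?case by (simp add: comp_assoc)
qed

lemma NF_id: "NF (id :: 'k::field_char_0 poly \<Rightarrow> 'k poly)"
proof -
  have "id = (\<lambda>p. smult 1 (xy 0 0 p :: 'k poly))" by (simp add: fun_eq_iff xy_def)
  then show ?thesis using NF_xy by metis
qed

lemma S1_NF: "a \<in> S1 \<Longrightarrow> NF a"
  using NF_comp[OF _ NF_id] by simp

lemma lin_S1: "a \<in> S1 \<Longrightarrow> lin a"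
proof (induction a rule: S1.induct)
  case S1_X then show ?case by (rule lin_opX)
next
  case S1_Y then show ?case by (rule lin_opY)
next
  case S1_one then show ?case by (simp add: lin_def)
next
  case (S1_add a b) then show ?case using lin_plus by blast
next
  case (S1_smult a c) then show ?case by (simp add: lin_def smult_add_right)
next
  case (S1_mult a b) then show ?case using lin_comp[of a b] by (simp add: comp_def)
qed

lemma LP_unique:
  assumes "LP a u N" "LP a w M" shows "u = w"
proof -
  define p :: "'a poly" where "p = monom 1 (max N M)"
  have "low N p" "low M p" by (auto simp: low_def p_def coeff_monom)
  then have "u * emb p = w * emb p" using assms by (metis LP_def)
  moreover have "emb p \<noteq> 0" by (simp add: emb_eq_0 p_def)
  ultimately show ?thesis by simp
qed

lemma bar_LP:
  assumes "a \<in> S1" shows "\<exists>N. LP a (bar a) N" and "LP a u N \<Longrightarrow> bar a = u"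
proof -
  obtain c where c: "finite (supp2 c)" "a = xy_comb c" using S1_NF[OF assms] NF_def by blast
  have L: "LP a (laurent_comb c) (Nb c)" using LP_xy_comb[OF c(1)] c(2) by simp
  have b: "bar a = laurent_comb c"
    unfolding bar_def
  proof (rule the_equality)
    show "\<exists>c'. finite (supp2 c') \<and> a = xy_comb c' \<and> laurent_comb c = laurent_comb c'" using c by blast
    fix u assume "\<exists>c'. finite (supp2 c') \<and> a = xy_comb c' \<and> u = laurent_comb c'"
    then obtain c' where c': "finite (supp2 c')" "a = xy_comb c'" "u = laurent_comb c'" by blast
    have "LP a u (Nb c')" using LP_xy_comb[OF c'(1)] c'(2,3) by simp
    then show "u = laurent_comb c" using LP_unique L by blast
  qed
  show "\<exists>N. LP a (bar a) N" using L b by auto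
  show "LP a u N \<Longrightarrow> bar a = u" using L b LP_unique by metis
qed

lemma E_eq: "E i j p = monom (coeff p j) i"
proof -
  have ar: "\<And>n. \<not> n < Suc i \<Longrightarrow> Suc (n + j - Suc i) = n + j - i" by arith
  show ?thesis by (auto simp: E_def xy_eq poly_eq_iff coeff_poly_shift coeff_monom_mult coeff_monom ar)
qed

lemma cutoff_sum: "poly_cutoff N (p :: 'k::field poly) = (\<Sum>j<N. smult (coeff p j) (monom 1 j))"
  by (simp add: poly_eq_iff coeff_poly_cutoff coeff_sum smult_monom coeff_monom)

lemma bar0_F:
  assumes aS: "a \<in> S1" and b0: "bar a = 0"
  shows "a \<in> F"
proof -
  obtain N where N: "LP a (bar a) N" using bar_LP(1)[OF aS] by blast
  have la: "lin a" by (rule lin_S1[OF aS])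
  have hi: "a p = 0" if "low N p" for p
    using N that b0 by (simp add: LP_def emb_eq_0)
  have ap: "a p = (\<Sum>j<N. smult (coeff p j) (a (monom 1 j)))" for p
  proof -
    have "low N (p - poly_cutoff N p)" by (simp add: low_def coeff_poly_cutoff)
    then have "a (p - poly_cutoff N p) = 0" by (rule hi)
    then have "a p = a (poly_cutoff N p)" by (simp add: lin_diff[OF la])
    also have "\<dots> = (\<Sum>j<N. smult (coeff p j) (a (monom 1 j)))"
      by (simp add: cutoff_sum lin_sum[OF la] lin_smult[OF la])
    finally show ?thesis .
  qed
  define D where "D = (\<Sum>j<N. degree (a (monom 1 j)))"
  have degD: "j < N \<Longrightarrow> degree (a (monom 1 j)) \<le> D" for j
    unfolding D_def by (rule member_le_sum) auto
  define c where "c i j = (if j < N then coeff (a (monom 1 j)) i else 0)" for i j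
  define S where "S = {..D} \<times> {..<N}"
  have fS: "finite S" by (simp add: S_def)
  have cS: "supp2 c \<subseteq> S"
  proof
    fix x assume "x \<in> supp2 c"
    then obtain i j where x: "x = (i, j)" "c i j \<noteq> 0" by (auto simp: supp2_def)
    then have j: "j < N" and cz: "coeff (a (monom 1 j)) i \<noteq> 0" by (auto simp: c_def split: if_splits)
    have "i \<le> degree (a (monom 1 j))" by (rule le_degree[OF cz])
    then show "x \<in> S" using degD[OF j] j x by (simp add: S_def)
  qed
  have "a = (\<lambda>p. \<Sum>(i, j)\<in>supp2 c. smult (c i j) (E i j p))"
  proof
    fix p
    have "(\<Sum>(i, j)\<in>supp2 c. smult (c i j) (E i j p)) = (\<Sum>(i, j)\<in>S. smult (c i j) (E i j p))"
      by (rule sum.mono_neutral_left[OF fS cS]) (auto simp: supp2_def)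
    also have "\<dots> = (\<Sum>i\<le>D. \<Sum>j<N. smult (c i j) (E i j p))"
      unfolding S_def by (rule sum.cartesian_product[symmetric])
    also have "\<dots> = (\<Sum>j<N. \<Sum>i\<le>D. smult (c i j) (E i j p))"
      by (rule sum.swap)
    also have "\<dots> = (\<Sum>j<N. smult (coeff p j) (a (monom 1 j)))"
    proof (rule sum.cong[OF refl])
      fix j assume "j \<in> {..<N}"
      then have j: "j < N" by simp
      have "(\<Sum>i\<le>D. smult (c i j) (E i j p)) = (\<Sum>i\<le>D. smult (coeff p j) (monom (coeff (a (monom 1 j)) i) i))"
        using j by (simp add: E_eq c_def smult_monom mult.commute)
      also have "\<dots> = smult (coeff p j) (\<Sum>i\<le>D. monom (coeff (a (monom 1 j)) i) i)"
        by (simp add: pvs.scale_sum_right)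
      also have "(\<Sum>i\<le>D. monom (coeff (a (monom 1 j)) i) i) = a (monom 1 j)"
        by (rule poly_as_sum_of_monoms'[OF degD[OF j]])
      finally show "(\<Sum>i\<le>D. smult (c i j) (E i j p)) = smult (coeff p j) (a (monom 1 j))" .
    qed
    also have "\<dots> = a p" by (rule ap[symmetric])
    finally show "a p = (\<Sum>(i, j)\<in>supp2 c. smult (c i j) (E i j p))" by simp
  qed
  moreover have "finite (supp2 c)" using fS cS finite_subset by blast
  ultimately show ?thesis unfolding F_def by blast
qed

lemma emb_one: "emb 1 = 1"
  by (simp add: emb_def)

lemma part1_core:
  assumes aS: "a \<in> S1" and u0: "bar a \<noteq> 0"
  shows "fin_dim_ker a \<and> fin_dim_coker a \<and> ind a = - laurent_deg (bar a)"
proof -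
  define u where "u = bar a"
  obtain N where N: "LP a u N" using bar_LP(1)[OF aS] u_def by blast
  have la: "lin a" by (rule lin_S1[OF aS])
  define q where "q = a (monom 1 N)"
  have embm: "emb (monom 1 N * r) = fls_X_intpow (int N) * emb r" for r :: "'a poly"
    using fls_X_intpow_times_conv_shift(1)[of "int N" "emb r"] by (simp add: emb_monom_mult)
  have lowm: "low N (monom 1 N :: 'a poly)" by (simp add: low_def coeff_monom)
  have embq: "emb q = u * fls_X_intpow (int N)"
  proof -
    have "emb q = u * emb (monom 1 N :: 'a poly)" using N lowm by (simp add: LP_def q_def)
    also have "emb (monom 1 N :: 'a poly) = fls_X_intpow (int N)"
      using embm[of 1] by (simp add: emb_one)
    finally show ?thesis .
  qed
  have q0: "q \<noteq> 0"
  proof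
    assume "q = 0"
    then have "u * fls_X_intpow (int N) = 0" using embq by simp
    then show False using u0 u_def by simp
  qed
  have eq: "a p = q * poly_shift N p" if "\<forall>i<N. coeff p i = 0" for p
  proof -
    have lp: "low N p" using that by (simp add: low_def)
    have pe: "p = monom 1 N * poly_shift N p"
      using that by (auto simp: poly_eq_iff coeff_monom_mult coeff_poly_shift)
    have "emb (a p) = u * emb p" using N lp by (simp add: LP_def)
    also have "\<dots> = u * (fls_X_intpow (int N) * emb (poly_shift N p))"
      by (subst pe) (simp add: embm)
    also have "\<dots> = emb (q * poly_shift N p)" by (simp add: emb_mult embq mult.assoc)
    finally show ?thesis by (simp add: emb_inj)
  qed
  have I: "fin_dim_ker a \<and> fin_dim_coker a \<and> ind a = int N - int (degree q)"
    by (rule op_index[OF la q0 eq])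
  have unth: "fls_nth u n = (if n + int N < 0 then 0 else coeff q (nat (n + int N)))" for n
  proof -
    have "fls_nth (emb q) (n + int N) = fls_nth u n"
      using embq fls_X_intpow_times_conv_shift(2)[of u "int N"] by simp
    then show ?thesis by (simp add: emb_nth)
  qed
  have "laurent_deg u = int (degree q) - int N"
    unfolding laurent_deg_def
  proof (rule Max_eqI)
    have "{n. fls_nth u n \<noteq> 0} \<subseteq> (\<lambda>i. int i - int N) ` {..degree q}"
    proof
      fix n assume "n \<in> {n. fls_nth u n \<noteq> 0}"
      then have n: "\<not> n + int N < 0" "coeff q (nat (n + int N)) \<noteq> 0" by (auto simp: unth split: if_splits)
      then have "nat (n + int N) \<le> degree q" using le_degree by blast
      moreover have "n = int (nat (n + int N)) - int N" using n(1) by simp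
      ultimately show "n \<in> (\<lambda>i. int i - int N) ` {..degree q}" by blast
    qed
    then show "finite {n. fls_nth u n \<noteq> 0}" using finite_surj by blast
    fix y assume "y \<in> {n. fls_nth u n \<noteq> 0}"
    then have n: "\<not> y + int N < 0" "coeff q (nat (y + int N)) \<noteq> 0" by (auto simp: unth split: if_splits)
    then have "nat (y + int N) \<le> degree q" using le_degree by blast
    then show "y \<le> int (degree q) - int N" using n(1) by linarith
  next
    have "fls_nth u (int (degree q) - int N) = lead_coeff q" by (simp add: unth)
    then show "int (degree q) - int N \<in> {n. fls_nth u n \<noteq> 0}" using q0 by simp
  qed
  then show ?thesis using I u_def by simp
qed

lemma S1_zero: "(\<lambda>p. 0) \<in> S1"
  using S1_smult[OF S1_one, of 0] by simp

lemma S1_sum: "finite A \<Longrightarrow> \<forall>s\<in>A. f s \<in> S1 \<Longrightarrow> (\<lambda>p. \<Sum>s\<in>A. f s p) \<in> S1"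
proof (induction A rule: finite_induct)
  case empty then show ?case using S1_zero by simp
next
  case (insert x A)
  then have "(\<lambda>p. f x p + (\<Sum>s\<in>A. f s p)) \<in> S1" by (intro S1_add) auto
  then show ?case using insert by simp
qed

lemma S1_pow: "f \<in> S1 \<Longrightarrow> f ^^ n \<in> S1"
  by (induction n) (auto intro: S1_mult S1_one)

lemma S1_xy: "xy i j \<in> S1"
  unfolding xy_def by (intro S1_mult S1_pow S1_X S1_Y)

lemma low_0: "low 0 p" by (simp add: low_def)

lemma LP_add:
  fixes a b :: "'k::field_char_0 poly \<Rightarrow> 'k poly"
  shows "LP a u N \<Longrightarrow> LP b w M \<Longrightarrow> LP (\<lambda>p. a p + b p) (u + w) (max N M)"
  unfolding LP_def
proof (intro allI impI)
  fix p :: "'k poly" assume A: "\<forall>p. low N p \<longrightarrow> emb (a p) = u * emb p" and B: "\<forall>p. low M p \<longrightarrow> emb (b p) = w * emb p"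
    and l: "low (max N M) p"
  have "low N p" "low M p" using low_mono[OF l] by auto
  then show "emb (a p + b p) = (u + w) * emb p" using A B by (simp add: emb_add distrib_right)
qed

lemma LP_smult: "LP a u N \<Longrightarrow> LP (\<lambda>p. smult k (a p)) (fls_const k * u) N"
  unfolding LP_def by (auto simp: emb_smult mult.assoc)

lemma LP_id: "LP id 1 0"
  unfolding LP_def by simp

lemma low_emb: "low M p \<Longrightarrow> p \<noteq> 0 \<Longrightarrow> int M \<le> fls_subdegree (emb p)"
  by (rule fls_subdegree_geI) (auto simp: emb_eq_0 emb_nth low_def)

lemma LP_comp:
  fixes a b :: "'k::field_char_0 poly \<Rightarrow> 'k poly"
  assumes la: "lin a" and A: "LP a u N" and B: "LP b w M"
  shows "LP (a \<circ> b) (u * w) (M + N + nat (- fls_subdegree w))"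
  unfolding LP_def
proof (intro allI impI)
  fix p :: "'k poly" assume lp: "low (M + N + nat (- fls_subdegree w)) p"
  have e: "emb (b p) = w * emb p" using B lp low_mono[OF lp, of M] by (simp add: LP_def)
  have "low N (b p)"
    unfolding low_def
  proof (intro allI impI)
    fix i assume i: "i < N"
    have "coeff (b p) i = fls_nth (emb (b p)) (int i)" by (simp add: emb_nth)
    also have "\<dots> = fls_nth (w * emb p) (int i)" by (simp add: e)
    also have "\<dots> = 0"
    proof (cases "w = 0 \<or> p = 0")
      case True then show ?thesis by auto
    next
      case False
      then have "int (M + N + nat (- fls_subdegree w)) \<le> fls_subdegree (emb p)"
        using low_emb[OF lp] by blast
      then have "int i < fls_subdegree w + fls_subdegree (emb p)" using i by linarith
      then show ?thesis by (rule fls_times_nth_eq0)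
    qed
    finally show "coeff (b p) i = 0" .
  qed
  then have "emb (a (b p)) = u * emb (b p)" using A by (simp add: LP_def)
  then show "emb ((a \<circ> b) p) = u * w * emb p" by (simp add: e mult.assoc)
qed

lemma bar_add: "a \<in> S1 \<Longrightarrow> b \<in> S1 \<Longrightarrow> bar (\<lambda>p. a p + b p) = bar a + bar b"
proof -
  assume a: "a \<in> S1" and b: "b \<in> S1"
  obtain N M where "LP a (bar a) N" "LP b (bar b) M" using bar_LP(1) a b by blast
  then have "LP (\<lambda>p. a p + b p) (bar a + bar b) (max N M)" by (rule LP_add)
  then show ?thesis using bar_LP(2)[OF S1_add[OF a b]] by blast
qed

lemma bar_smult: "a \<in> S1 \<Longrightarrow> bar (\<lambda>p. smult k (a p)) = fls_const k * bar a"
proof -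
  assume a: "a \<in> S1"
  obtain N where "LP a (bar a) N" using bar_LP(1) a by blast
  then have "LP (\<lambda>p. smult k (a p)) (fls_const k * bar a) N" by (rule LP_smult)
  then show ?thesis using bar_LP(2)[OF S1_smult[OF a]] by blast
qed

lemma bar_id: "bar id = 1"
  using bar_LP(2)[OF S1_one LP_id] .

lemma bar_comp: "a \<in> S1 \<Longrightarrow> b \<in> S1 \<Longrightarrow> bar (a \<circ> b) = bar a * bar b"
proof -
  assume a: "a \<in> S1" and b: "b \<in> S1"
  obtain N M where "LP a (bar a) N" "LP b (bar b) M" using bar_LP(1) a b by blast
  then have "LP (a \<circ> b) (bar a * bar b) (M + N + nat (- fls_subdegree (bar b)))"
    by (intro LP_comp lin_S1 a)
  then show ?thesis using bar_LP(2)[OF S1_mult[OF a b]] by blast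
qed

lemma bar_zero: "bar (\<lambda>p. 0) = 0"
proof -
  have "LP (\<lambda>p. 0) 0 0" by (simp add: LP_def)
  then show ?thesis using bar_LP(2)[OF S1_zero] by blast
qed

lemma bar_sum: "finite A \<Longrightarrow> \<forall>s\<in>A. f s \<in> S1 \<Longrightarrow> bar (\<lambda>p. \<Sum>s\<in>A. f s p) = (\<Sum>s\<in>A. bar (f s))"
proof (induction A rule: finite_induct)
  case empty then show ?case using bar_zero by simp
next
  case (insert x A)
  have "bar (\<lambda>p. f x p + (\<Sum>s\<in>A. f s p)) = bar (f x) + bar (\<lambda>p. \<Sum>s\<in>A. f s p)"
    using insert by (intro bar_add S1_sum) auto
  then show ?case using insert by simp
qed

lemma bar_pow: "f \<in> S1 \<Longrightarrow> bar (f ^^ n) = bar f ^ n"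
  by (induction n) (simp_all add: bar_id bar_comp S1_pow)

lemma bar_xy: "bar (xy i j) = fls_X_intpow (int i - int j)"
proof -
  have "LP (xy i j) (fls_X_intpow (int i - int j)) j"
    unfolding LP_def using emb_xy by blast
  then show ?thesis using bar_LP(2)[OF S1_xy] by blast
qed

lemma aut_D:
  assumes "is_S1_aut \<sigma>"
  shows "bij_betw \<sigma> S1 S1"
    and "\<forall>a\<in>S1. \<forall>b\<in>S1. \<sigma> (\<lambda>p. a p + b p) = (\<lambda>p. \<sigma> a p + \<sigma> b p)"
    and "\<forall>a\<in>S1. \<forall>c. \<sigma> (\<lambda>p. smult c (a p)) = (\<lambda>p. smult c (\<sigma> a p))"
    and "\<forall>a\<in>S1. \<forall>b\<in>S1. \<sigma> (a \<circ> b) = \<sigma> a \<circ> \<sigma> b"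
    and "\<sigma> id = id"
  using assms unfolding is_S1_aut_def by simp_all

lemma aut_S1: "is_S1_aut \<sigma> \<Longrightarrow> a \<in> S1 \<Longrightarrow> \<sigma> a \<in> S1"
  using aut_D(1) bij_betw_apply by metis

lemma aut_add: "is_S1_aut \<sigma> \<Longrightarrow> a \<in> S1 \<Longrightarrow> b \<in> S1 \<Longrightarrow> \<sigma> (\<lambda>p. a p + b p) = (\<lambda>p. \<sigma> a p + \<sigma> b p)"
  using aut_D(2) by blast

lemma aut_smult: "is_S1_aut \<sigma> \<Longrightarrow> a \<in> S1 \<Longrightarrow> \<sigma> (\<lambda>p. smult k (a p)) = (\<lambda>p. smult k (\<sigma> a p))"
  using aut_D(3) by blast

lemma aut_comp: "is_S1_aut \<sigma> \<Longrightarrow> a \<in> S1 \<Longrightarrow> b \<in> S1 \<Longrightarrow> \<sigma> (a \<circ> b) = \<sigma> a \<circ> \<sigma> b"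
  using aut_D(4) by blast

lemma aut_id: "is_S1_aut \<sigma> \<Longrightarrow> \<sigma> id = id"
  using aut_D(5) by blast

lemma aut_zero: "is_S1_aut \<sigma> \<Longrightarrow> \<sigma> (\<lambda>p. 0) = (\<lambda>p. 0)"
proof -
  assume s: "is_S1_aut \<sigma>"
  have "\<sigma> (\<lambda>p. smult 0 (id p)) = (\<lambda>p. smult 0 (\<sigma> id p))" by (rule aut_smult[OF s S1_one])
  then show ?thesis by simp
qed

lemma aut_sum:
  assumes s: "is_S1_aut \<sigma>" and A: "finite A" "\<forall>s\<in>A. f s \<in> S1"
  shows "\<sigma> (\<lambda>p. \<Sum>s\<in>A. f s p) = (\<lambda>p. \<Sum>s\<in>A. \<sigma> (f s) p)"
  using A
proof (induction A rule: finite_induct)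
  case empty then show ?case using aut_zero[OF s] by simp
next
  case (insert x A)
  have "\<sigma> (\<lambda>p. f x p + (\<Sum>s\<in>A. f s p)) = (\<lambda>p. \<sigma> (f x) p + \<sigma> (\<lambda>p. \<Sum>s\<in>A. f s p) p)"
    using insert by (intro aut_add[OF s] S1_sum) auto
  then show ?case using insert by simp
qed

lemma aut_pow: "is_S1_aut \<sigma> \<Longrightarrow> f \<in> S1 \<Longrightarrow> \<sigma> (f ^^ n) = (\<sigma> f) ^^ n"
  by (induction n) (simp_all add: aut_id aut_comp S1_pow fun_eq_iff)

lemma aut_xy:
  assumes s: "is_S1_aut \<sigma>" shows "\<sigma> (xy i j) = (\<sigma> opX ^^ i) \<circ> (\<sigma> opY ^^ j)"
proof -
  have "\<sigma> (xy i j) = \<sigma> (opX ^^ i) \<circ> \<sigma> (opY ^^ j)"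
    unfolding xy_def by (rule aut_comp[OF s S1_pow[OF S1_X] S1_pow[OF S1_Y]])
  then show ?thesis by (simp only: aut_pow[OF s S1_X] aut_pow[OF s S1_Y])
qed

lemma bar_aut:
  assumes s: "is_S1_aut \<sigma>" and c: "finite (supp2 c)"
  shows "bar (\<sigma> (xy_comb c)) = (\<Sum>x\<in>supp2 c. fls_const (c (fst x) (snd x)) *
            (bar (\<sigma> opX) ^ fst x * bar (\<sigma> opY) ^ snd x))"
proof -
  define f where "f x = (\<lambda>p. smult (c (fst x) (snd x)) (xy (fst x) (snd x) p))" for x
  have fS: "\<forall>x\<in>supp2 c. f x \<in> S1" unfolding f_def by (auto intro: S1_smult S1_xy)
  have "xy_comb c = (\<lambda>p. \<Sum>x\<in>supp2 c. f x p)" by (simp add: fun_eq_iff xy_comb_alt f_def)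
  then have "\<sigma> (xy_comb c) = (\<lambda>p. \<Sum>x\<in>supp2 c. \<sigma> (f x) p)" using aut_sum[OF s c fS] by simp
  then have "bar (\<sigma> (xy_comb c)) = (\<Sum>x\<in>supp2 c. bar (\<sigma> (f x)))"
    using bar_sum[OF c, of "\<lambda>x. \<sigma> (f x)"] fS aut_S1[OF s] by simp
  also have "\<dots> = (\<Sum>x\<in>supp2 c. fls_const (c (fst x) (snd x)) *
            (bar (\<sigma> opX) ^ fst x * bar (\<sigma> opY) ^ snd x))"
  proof (rule sum.cong[OF refl])
    fix x
    have A: "\<sigma> opX \<in> S1" "\<sigma> opY \<in> S1" using aut_S1[OF s] S1_X S1_Y by auto
    have "\<sigma> (f x) = (\<lambda>p. smult (c (fst x) (snd x)) (\<sigma> (xy (fst x) (snd x)) p))"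
      unfolding f_def by (rule aut_smult[OF s S1_xy])
    then have "bar (\<sigma> (f x)) = bar (\<lambda>p. smult (c (fst x) (snd x)) (\<sigma> (xy (fst x) (snd x)) p))"
      by (simp only:)
    also have "\<dots> = fls_const (c (fst x) (snd x)) * bar (\<sigma> (xy (fst x) (snd x)))"
      by (rule bar_smult[OF aut_S1[OF s S1_xy]])
    also have "bar (\<sigma> (xy (fst x) (snd x))) = bar (\<sigma> opX) ^ fst x * bar (\<sigma> opY) ^ snd x"
      using A by (simp add: aut_xy[OF s] bar_comp bar_pow S1_pow)
    finally show "bar (\<sigma> (f x)) = fls_const (c (fst x) (snd x)) *
            (bar (\<sigma> opX) ^ fst x * bar (\<sigma> opY) ^ snd x)" .
  qed
  finally show ?thesis .
qed

lemma Xnth: "fls_nth (fls_X_intpow m :: 'a::field fls) n = (if n = m then 1 else 0)"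
  by simp

lemma laurent_nth: "fls_nth (laurent_comb c) n =
  (\<Sum>x\<in>supp2 c. if n = int (fst x) - int (snd x) then c (fst x) (snd x) else 0)"
  unfolding laurent_comb_def by (auto simp: fls_nth_sum case_prod_beta intro!: sum.cong)

lemma S1_bar_comb:
  assumes "a \<in> S1" obtains c where "finite (supp2 c)" "a = xy_comb c" "bar a = laurent_comb c"
proof -
  obtain c where c: "finite (supp2 c)" "a = xy_comb c" using S1_NF[OF assms] NF_def by blast
  have "bar a = laurent_comb c" using bar_LP(2)[OF assms] LP_xy_comb[OF c(1)] c(2) by simp
  then show ?thesis using that c by blast
qed

lemma lpoly_bar:
  assumes "a \<in> S1" shows "finite {n. fls_nth (bar a) n \<noteq> 0}"
proof -
  obtain c where c: "finite (supp2 c)" "bar a = laurent_comb c" using S1_bar_comb[OF assms] by metis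
  have "{n. fls_nth (bar a) n \<noteq> 0} \<subseteq> (\<lambda>x. int (fst x) - int (snd x)) ` supp2 c"
  proof
    fix n assume "n \<in> {n. fls_nth (bar a) n \<noteq> 0}"
    then have "fls_nth (laurent_comb c) n \<noteq> 0" using c(2) by simp
    then have "(\<Sum>x\<in>supp2 c. if n = int (fst x) - int (snd x) then c (fst x) (snd x) else 0) \<noteq> 0"
      by (simp add: laurent_nth)
    note nz = this
    have "\<exists>x\<in>supp2 c. n = int (fst x) - int (snd x)"
    proof (rule ccontr)
      assume "\<not> (\<exists>x\<in>supp2 c. n = int (fst x) - int (snd x))"
      then have "(\<Sum>x\<in>supp2 c. if n = int (fst x) - int (snd x) then c (fst x) (snd x) else 0) = 0"
        by (intro sum.neutral) auto
      then show False using nz by simp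
    qed
    then obtain x where "x \<in> supp2 c" "n = int (fst x) - int (snd x)" by blast
    then show "n \<in> (\<lambda>x. int (fst x) - int (snd x)) ` supp2 c" by blast
  qed
  then show ?thesis using c(1) finite_subset by blast
qed

lemma unit_mono:
  fixes U V :: "'k::field fls"
  assumes UV: "U * V = 1" and fU: "finite {n. fls_nth U n \<noteq> 0}" and fV: "finite {n. fls_nth V n \<noteq> 0}"
  shows "\<exists>l k. l \<noteq> 0 \<and> U = fls_const l * fls_X_intpow k"
proof -
  have U0: "U \<noteq> 0" and V0: "V \<noteq> 0" using UV by auto
  define dU where "dU = Max {n. fls_nth U n \<noteq> 0}"
  define dV where "dV = Max {n. fls_nth V n \<noteq> 0}"
  obtain nu where "fls_nth U nu \<noteq> 0" using U0 fls_nonzero_nth by blast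
  then have neU: "{n. fls_nth U n \<noteq> 0} \<noteq> {}" by blast
  obtain nv where "fls_nth V nv \<noteq> 0" using V0 fls_nonzero_nth by blast
  then have neV: "{n. fls_nth V n \<noteq> 0} \<noteq> {}" by blast
  have dUin: "fls_nth U dU \<noteq> 0" using Max_in[OF fU neU] dU_def by simp
  have dVin: "fls_nth V dV \<noteq> 0" using Max_in[OF fV neV] dV_def by simp
  have dUmax: "fls_nth U n \<noteq> 0 \<Longrightarrow> n \<le> dU" for n using Max_ge[OF fU] dU_def by simp
  have dVmax: "fls_nth V n \<noteq> 0 \<Longrightarrow> n \<le> dV" for n using Max_ge[OF fV] dV_def by simp
  define sU where "sU = fls_subdegree U"
  define sV where "sV = fls_subdegree V"
  have sUle: "sU \<le> dU" using fls_subdegree_leI[OF dUin] sU_def by simp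
  have sVle: "sV \<le> dV" using fls_subdegree_leI[OF dVin] sV_def by simp
  have prod: "fls_nth (U * V) (dU + dV) = (\<Sum>i=sU..dU + dV - sV. fls_nth U i * fls_nth V (dU + dV - i))"
    unfolding sU_def sV_def by (rule fls_times_nth(2))
  also have "\<dots> = fls_nth U dU * fls_nth V (dU + dV - dU)"
  proof -
    have mem: "dU \<in> {sU..dU + dV - sV}" using sUle sVle by simp
    have "(\<Sum>i=sU..dU + dV - sV. fls_nth U i * fls_nth V (dU + dV - i)) =
      fls_nth U dU * fls_nth V (dU + dV - dU) +
      (\<Sum>i\<in>{sU..dU + dV - sV} - {dU}. fls_nth U i * fls_nth V (dU + dV - i))"
      by (rule sum.remove[OF finite_atLeastAtMost_int mem])
    moreover have "(\<Sum>i\<in>{sU..dU + dV - sV} - {dU}. fls_nth U i * fls_nth V (dU + dV - i)) = 0"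
    proof (rule sum.neutral, rule ballI)
      fix i assume i: "i \<in> {sU..dU + dV - sV} - {dU}"
      show "fls_nth U i * fls_nth V (dU + dV - i) = 0"
      proof (cases "i < dU")
        case True
        then have nle: "\<not> dU + dV - i \<le> dV" by linarith
        have "fls_nth V (dU + dV - i) = 0"
        proof (rule ccontr)
          assume "fls_nth V (dU + dV - i) \<noteq> 0"
          then show False using dVmax nle by blast
        qed
        then show ?thesis by simp
      next
        case False
        then have nle: "\<not> i \<le> dU" using i by auto
        have "fls_nth U i = 0"
        proof (rule ccontr)
          assume "fls_nth U i \<noteq> 0"
          then show False using dUmax nle by blast
        qed
        then show ?thesis by simp
      qed
    qed
    ultimately show ?thesis by simp
  qed
  finally have "fls_nth (U * V) (dU + dV) \<noteq> 0" using dUin dVin by simp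
  then have s0: "dU + dV = 0" using UV by (simp split: if_splits)
  have "fls_subdegree (U * V) = sU + sV" using U0 V0 by (simp add: sU_def sV_def)
  then have "sU + sV = 0" using UV by simp
  then have eqs: "sU = dU" using s0 sUle sVle by linarith
  define l where "l = fls_nth U dU"
  have "U = fls_const l * fls_X_intpow dU"
  proof (rule fls_eqI)
    fix n
    show "fls_nth U n = fls_nth (fls_const l * fls_X_intpow dU) n"
    proof (cases "n = dU")
      case True then show ?thesis by (simp add: l_def)
    next
      case False
      have "fls_nth U n = 0"
      proof (cases "n < dU")
        case True then show ?thesis using eqs sU_def by simp
      next
        case False
        show ?thesis
        proof (rule ccontr)
          assume "fls_nth U n \<noteq> 0"
          then have "n \<le> dU" by (rule dUmax)
          then show False using False \<open>n \<noteq> dU\<close> by linarith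
        qed
      qed
      then show ?thesis using False by simp
    qed
  qed
  moreover have "l \<noteq> 0" using dUin l_def by simp
  ultimately show ?thesis by (intro exI[of _ l] exI[of _ dU]) simp
qed

lemma mono_mult: "(fls_const a * fls_X_intpow p) * (fls_const b * fls_X_intpow q) =
   fls_const (a * b) * (fls_X_intpow (p + q) :: 'k::field fls)"
proof -
  have "(fls_const a * fls_X_intpow p) * (fls_const b * fls_X_intpow q) =
     (fls_const a * fls_const b) * (fls_X_intpow p * (fls_X_intpow q :: 'k fls))"
    by (simp only: ac_simps)
  also have "\<dots> = fls_const (a * b) * fls_X_intpow (p + q)"
    by (simp only: fls_const_mult_const fls_X_intpow_times_fls_X_intpow)
  finally show ?thesis .
qed

lemma mono_pow: "(fls_const a * fls_X_intpow p) ^ i = fls_const (a ^ i) * (fls_X_intpow (int i * p) :: 'k::field fls)"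
proof (induction i)
  case 0 then show ?case by simp
next
  case (Suc i)
  have "(fls_const a * fls_X_intpow p) ^ Suc i = (fls_const a * fls_X_intpow p) * (fls_const (a ^ i) * fls_X_intpow (int i * p))"
    using Suc by simp
  also have "\<dots> = fls_const (a * a ^ i) * (fls_X_intpow (p + int i * p) :: 'k fls)" by (rule mono_mult)
  also have "p + int i * p = int (Suc i) * p" by (simp add: algebra_simps)
  finally show ?case by simp
qed

lemma mono_nth: "fls_nth (fls_const a * (fls_X_intpow p :: 'k::field fls)) n = (if n = p then a else 0)"
  by simp

lemma term_nth:
  "fls_nth (fls_const c * ((fls_const l * fls_X_intpow k) ^ i * (fls_const m * fls_X_intpow (- k)) ^ j)) n
    = (if n = k * (int i - int j) then c * l ^ i * m ^ j else (0 :: 'k::field))"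
proof -
  have "fls_const c * ((fls_const l * fls_X_intpow k) ^ i * (fls_const m * fls_X_intpow (- k)) ^ j)
     = (fls_const c * fls_X_intpow 0) * (fls_const (l ^ i * m ^ j) * (fls_X_intpow (int i * k + int j * (- k)) :: 'k fls))"
    by (simp only: mono_pow mono_mult) simp
  also have "\<dots> = fls_const (c * (l ^ i * m ^ j)) * (fls_X_intpow (0 + (int i * k + int j * (- k))) :: 'k fls)"
    by (rule mono_mult)
  finally have e: "fls_const c * ((fls_const l * fls_X_intpow k) ^ i * (fls_const m * fls_X_intpow (- k)) ^ j)
     = fls_const (c * (l ^ i * m ^ j)) * (fls_X_intpow (0 + (int i * k + int j * (- k))) :: 'k fls)" .
  have "0 + (int i * k + int j * (- k)) = k * (int i - int j)" by (simp add: algebra_simps)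
  then show ?thesis unfolding e mono_nth by (simp add: mult.assoc)
qed

lemma opY_opX: "opY \<circ> opX = (id :: 'k::field_char_0 poly \<Rightarrow> 'k poly)"
  by (simp add: fun_eq_iff opX_def opY_def poly_eq_iff coeff_poly_shift)

lemma opX_xy10: "opX = (xy 1 0 :: 'k::field_char_0 poly \<Rightarrow> 'k poly)"
  by (simp add: fun_eq_iff xy_def)

lemma bar_opX: "bar (opX :: 'k::field_char_0 poly \<Rightarrow> 'k poly) = fls_X_intpow 1"
proof -
  have "bar (xy 1 0 :: 'k poly \<Rightarrow> 'k poly) = fls_X_intpow (int 1 - int 0)" by (rule bar_xy)
  then show ?thesis unfolding opX_xy10 by simp
qed

lemma bar_aut_nth:
  assumes s: "is_S1_aut \<sigma>" and c: "finite (supp2 c)" and l0: "l \<noteq> 0"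
    and U: "bar (\<sigma> opX) = fls_const l * fls_X_intpow k"
    and V: "bar (\<sigma> opY) = fls_const (1 / l) * fls_X_intpow (- k)"
  shows "fls_nth (bar (\<sigma> (xy_comb c))) n = (\<Sum>x\<in>supp2 c.
     if n = k * (int (fst x) - int (snd x)) then c (fst x) (snd x) * l ^ fst x * (1 / l) ^ snd x else 0)"
  unfolding bar_aut[OF s c] U V fls_nth_sum by (simp only: term_nth)

theorem part2:
  fixes a :: "'k::field_char_0 poly \<Rightarrow> 'k poly"
  assumes s: "is_S1_aut \<sigma>" and aS: "a \<in> S1" and a0: "bar a \<noteq> 0"
  shows "ind (\<sigma> a) = ind a"
proof -
  define A where "A = \<sigma> opX"
  define B where "B = \<sigma> opY"
  have AS: "A \<in> S1" and BS: "B \<in> S1" using aut_S1[OF s] S1_X S1_Y A_def B_def by auto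
  have BA: "B \<circ> A = id"
  proof -
    have "B \<circ> A = \<sigma> (opY \<circ> opX)" unfolding A_def B_def by (rule aut_comp[OF s S1_Y S1_X, symmetric])
    also have "\<dots> = id" by (simp add: opY_opX aut_id[OF s])
    finally show ?thesis .
  qed
  define U where "U = bar A"
  define V where "V = bar B"
  have "V * U = bar (B \<circ> A)" unfolding U_def V_def by (rule bar_comp[OF BS AS, symmetric])
  also have "\<dots> = 1" unfolding BA by (rule bar_id)
  finally have "V * U = 1" .
  then have UV: "U * V = 1" by (simp add: mult.commute)
  obtain l k where l0: "l \<noteq> 0" and Ueq: "U = fls_const l * fls_X_intpow k"
    using unit_mono[OF UV lpoly_bar[OF AS, folded U_def] lpoly_bar[OF BS, folded V_def]] by blast
  have Veq: "V = fls_const (1 / l) * fls_X_intpow (- k)"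
  proof -
    have "U * (fls_const (1 / l) * fls_X_intpow (- k)) = fls_const (l * (1 / l)) * fls_X_intpow (k + - k)"
      unfolding Ueq by (rule mono_mult)
    also have "\<dots> = 1" using l0 by simp
    finally have "U * (fls_const (1 / l) * fls_X_intpow (- k)) = U * V" using UV by simp
    moreover have "U \<noteq> 0" using UV by auto
    ultimately show ?thesis by simp
  qed
  have NTH: "fls_nth (bar (\<sigma> (xy_comb c))) n = (\<Sum>x\<in>supp2 c.
     if n = k * (int (fst x) - int (snd x)) then c (fst x) (snd x) * l ^ fst x * (1 / l) ^ snd x else 0)"
    if "finite (supp2 c)" for c n
    using bar_aut_nth[OF s that l0] Ueq Veq U_def V_def A_def B_def by simp
  have k1: "k = 1 \<or> k = -1"
  proof -
    have "\<sigma> ` S1 = S1" using aut_D(1)[OF s] by (rule bij_betw_imp_surj_on)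
    then have "opX \<in> \<sigma> ` S1" using S1_X by (simp only:)
    then obtain a1 where a1': "opX = \<sigma> a1" "a1 \<in> S1" by (rule imageE)
    then have a1: "a1 \<in> S1" "\<sigma> a1 = opX" by simp_all
    obtain c1 where c1: "finite (supp2 c1)" "a1 = xy_comb c1" using S1_bar_comb[OF a1(1)] by blast
    have "fls_nth (bar (\<sigma> a1)) 1 = 1" unfolding a1(2) bar_opX by simp
    then have "fls_nth (bar (\<sigma> (xy_comb c1))) 1 = 1" by (simp only: c1(2))
    then have "(\<Sum>x\<in>supp2 c1. if 1 = k * (int (fst x) - int (snd x))
        then c1 (fst x) (snd x) * l ^ fst x * (1 / l) ^ snd x else 0) \<noteq> 0"
      by (simp only: NTH[OF c1(1), of 1]) simp
    note nz = this
    have "\<exists>x\<in>supp2 c1. 1 = k * (int (fst x) - int (snd x))"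
    proof (rule ccontr)
      assume "\<not> (\<exists>x\<in>supp2 c1. 1 = k * (int (fst x) - int (snd x)))"
      then have "(\<Sum>x\<in>supp2 c1. if 1 = k * (int (fst x) - int (snd x))
        then c1 (fst x) (snd x) * l ^ fst x * (1 / l) ^ snd x else 0) = 0"
        by (intro sum.neutral) auto
      then show False using nz by simp
    qed
    then obtain x where "1 = k * (int (fst x) - int (snd x))" by blast
    then have "k * (int (fst x) - int (snd x)) = 1" by simp
    then show ?thesis by (rule pos_zmult_eq_1_iff_lemma)
  qed
  have kn: "k \<noteq> -1"
  proof
    assume km: "k = -1"
    have U0: "U \<noteq> 0" using UV by auto
    have P: "fin_dim_ker A \<and> fin_dim_coker A \<and> ind A = - laurent_deg (bar A)"
      using part1_core[OF AS] U0 U_def by simp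
    have un: "fls_nth U n = (if n = -1 then l else 0)" for n using Ueq km by simp
    have "{n. fls_nth U n \<noteq> 0} = {-1}" using l0 by (auto simp: un)
    then have "laurent_deg U = -1" by (simp add: laurent_deg_def)
    then have i1: "ind A = 1" using P U_def by simp
    have "ker A = {0}"
    proof
      show "{0} \<subseteq> ker A" using lin_0[OF lin_S1[OF AS]] by (simp add: ker_def)
      show "ker A \<subseteq> {0}"
      proof
        fix p assume "p \<in> ker A"
        then have "A p = 0" by (simp add: ker_def)
        then have "B (A p) = 0" using lin_0[OF lin_S1[OF BS]] by simp
        moreover have "B (A p) = p"
        proof -
          have "(B \<circ> A) p = id p" by (simp only: BA)
          then show ?thesis by simp
        qed
        ultimately show "p \<in> {0}" by simp
      qed
    qed
    then have "ind A = - int (dim_coker A)" by (simp add: ind_def dim_zero_space)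
    then show False using i1 by simp
  qed
  have kk: "k = 1" using k1 kn by simp
  obtain c where c: "finite (supp2 c)" "a = xy_comb c" "bar a = laurent_comb c"
    using S1_bar_comb[OF aS] by metis
  have nth_eq: "fls_nth (bar (\<sigma> a)) n = l powi n * fls_nth (bar a) n" for n
  proof -
    have "fls_nth (bar (\<sigma> a)) n = (\<Sum>x\<in>supp2 c.
       if n = int (fst x) - int (snd x) then c (fst x) (snd x) * l ^ fst x * (1 / l) ^ snd x else 0)"
      using NTH[OF c(1), of n] c(2) kk by simp
    also have "\<dots> = (\<Sum>x\<in>supp2 c. l powi n * (if n = int (fst x) - int (snd x) then c (fst x) (snd x) else 0))"
    proof (rule sum.cong[OF refl])
      fix x
      show "(if n = int (fst x) - int (snd x) then c (fst x) (snd x) * l ^ fst x * (1 / l) ^ snd x else 0) =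
        l powi n * (if n = int (fst x) - int (snd x) then c (fst x) (snd x) else 0)"
      proof (cases "n = int (fst x) - int (snd x)")
        case True
        have e: "l powi n = l ^ fst x / l ^ snd x"
        proof -
          have "l powi n = l powi (int (fst x) - int (snd x))" using True by simp
          also have "\<dots> = l ^ fst x / l ^ snd x" using l0 by (simp add: power_int_diff)
          finally show ?thesis .
        qed
        have "c (fst x) (snd x) * l ^ fst x * (1 / l) ^ snd x = l powi n * c (fst x) (snd x)"
          unfolding e by (simp add: power_one_over field_simps)
        then show ?thesis using True by simp
      qed simp
    qed
    also have "\<dots> = l powi n * fls_nth (bar a) n"
      by (simp add: sum_distrib_left c(3) laurent_nth)
    finally show ?thesis .
  qed
  have same: "{n. fls_nth (bar (\<sigma> a)) n \<noteq> 0} = {n. fls_nth (bar a) n \<noteq> 0}"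
    using nth_eq l0 by (simp add: power_int_not_zero)
  have sa0: "bar (\<sigma> a) \<noteq> 0"
  proof
    assume "bar (\<sigma> a) = 0"
    then have "{n. fls_nth (bar a) n \<noteq> 0} = {}" using same by simp
    moreover obtain n where "fls_nth (bar a) n \<noteq> 0" using a0 fls_nonzero_nth by blast
    ultimately show False by blast
  qed
  have "ind (\<sigma> a) = - laurent_deg (bar (\<sigma> a))" using part1_core[OF aut_S1[OF s aS] sa0] by simp
  also have "\<dots> = - laurent_deg (bar a)" unfolding laurent_deg_def same ..
  also have "\<dots> = ind a" using part1_core[OF aS a0] by simp
  finally show ?thesis .
qed

theorem lemma4p4:
  shows "(\<forall>a \<in> (S1 :: ('k::field_char_0 poly \<Rightarrow> 'k poly) set) - F.
            fin_dim_ker a \<and> fin_dim_coker a \<and> ind a = - laurent_deg (bar a))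
       \<and> (\<forall>\<sigma> :: ('k poly \<Rightarrow> 'k poly) \<Rightarrow> ('k poly \<Rightarrow> 'k poly). is_S1_aut \<sigma> \<longrightarrow>
            (\<forall>a \<in> S1 - F. ind (\<sigma> a) = ind a))"
proof (rule conjI)
  show "\<forall>a \<in> (S1 :: ('k::field_char_0 poly \<Rightarrow> 'k poly) set) - F.
            fin_dim_ker a \<and> fin_dim_coker a \<and> ind a = - laurent_deg (bar a)"
  proof
    fix a :: "'k poly \<Rightarrow> 'k poly" assume a: "a \<in> S1 - F"
    then have "bar a \<noteq> 0" using bar0_F by blast
    then show "fin_dim_ker a \<and> fin_dim_coker a \<and> ind a = - laurent_deg (bar a)"
      using part1_core a by blast
  qed
  show "\<forall>\<sigma> :: ('k poly \<Rightarrow> 'k poly) \<Rightarrow> ('k poly \<Rightarrow> 'k poly). is_S1_aut \<sigma> \<longrightarrow>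
            (\<forall>a \<in> S1 - F. ind (\<sigma> a) = ind a)"
  proof (intro allI impI ballI)
    fix \<sigma> :: "('k poly \<Rightarrow> 'k poly) \<Rightarrow> ('k poly \<Rightarrow> 'k poly)" and a :: "'k poly \<Rightarrow> 'k poly"
    assume s: "is_S1_aut \<sigma>" and a: "a \<in> S1 - F"
    then have "bar a \<noteq> 0" using bar0_F by blast
    then show "ind (\<sigma> a) = ind a" using part2[OF s] a by blast
  qed
qed

end
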